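(* Let $\mathsf{CL}'$ be the calculus $\mathsf{CL}$ in which the rule L$>$ is replaced by L$>^\star$ and the rule Mon$\forall$ is added. For every formula $A_0$ and world label $x_0$, root-first proof search for a $\mathsf{CL}'$-derivation of $\Rightarrow x_0:A_0$ built in accordance with the proof search strategy terminates in a finite number of steps, every branch ending with either an initial sequent or a saturated sequent.
   Context: Syntax: world labels, neighbourhood labels; relational atoms $a\in N(x)$, $x\in a$, $a\subseteq b$; labelled formulas: these, $x:A$, $a\Vdash^\exists A$, $a\Vdash^\forall A$, $x\Vdash_aA|B$, for $A,B\in\mathcal{L}::=p\mid\bot\mid A\wedge B\mid A\lor B\mid A\to B\mid A>B$. Sequents: multisets, relational atoms only on the left. Rules of $\mathsf{CL}'$ (premisses / conclusion; "fresh": label not in conclusion): initial sequents $x:p,\Gamma\Rightarrow\Delta,x:p$ ($p$ atomic), $x:\bot,\Gamma\Rightarrow\Delta$; G3 rules for $\wedge,\vee,\to$ on $x:A$; L$\forall$: $x:A,x\in a,a\Vdash^\forall A,\Gamma\Rightarrow\Delta$ / $x\in a,a\Vdash^\forall A,\Gamma\Rightarrow\Delta$; R$\forall$ (x fresh): $x\in a,\Gamma\Rightarrow\Delta,x:A$ / $\Gamma\Rightarrow\Delta,a\Vdash^\forall A$; L$\exists$ (x fresh): $x\in a,x:A,\Gamma\Rightarrow\Delta$ / $a\Vdash^\exists A,\Gamma\Rightarrow\Delta$; R$\exists$: $x\in a,\Gamma\Rightarrow\Delta,x:A,a\Vdash^\exists A$ / $x\in a,\Gamma\Rightarrow\Delta,a\Vdash^\exists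 A$; R$>$ (a fresh): $a\in N(x),a\Vdash^\exists A,\Gamma\Rightarrow\Delta,x\Vdash_aA|B$ / $\Gamma\Rightarrow\Delta,x:A>B$; L$>^\star$: $a\in N(x),x:A>B,\Gamma\Rightarrow\Delta,a\Vdash^\exists A$ and $a\Vdash^\exists A,x\Vdash_aA|B,a\in N(x),x:A>B,\Gamma\Rightarrow\Delta$ / $a\in N(x),x:A>B,\Gamma\Rightarrow\Delta$; R$|$: $c\in N(x),c\subseteq a,\Gamma\Rightarrow\Delta,x\Vdash_aA|B,c\Vdash^\exists A$ and $c\in N(x),c\subseteq a,\Gamma\Rightarrow\Delta,x\Vdash_aA|B,c\Vdash^\forall A\to B$ / $c\in N(x),c\subseteq a,\Gamma\Rightarrow\Delta,x\Vdash_aA|B$; L$|$ (c fresh): $c\in N(x),c\subseteq a,c\Vdash^\exists A,c\Vdash^\forall A\to B,\Gamma\Rightarrow\Delta$ / $x\Vdash_aA|B,\Gamma\Rightarrow\Delta$; Ref: $a\subseteq a,\Gamma\Rightarrow\Delta$ / $\Gamma\Rightarrow\Delta$; Tr: $c\subseteq a,c\subseteq b,b\subseteq a,\Gamma\Rightarrow\Delta$ / $c\subseteq b,b\subseteq a,\Gamma\Rightarrow\Delta$; L$\subseteq$: $x\in a,a\subseteq b,x\in b,\Gamma\Rightarrow\Delta$ / $x\in a,a\subseteq b,\Gamma\Rightarrow\Delta$; Mon$\forall$: $b\subseteq a,b\Vdash^\forall A,a\Vdash^\forall A,\Gamma\Rightarrow\Delta$ / $b\subseteq a,a\Vdash^\forall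 A,\Gamma\Rightarrow\Delta$. For a branch $S_0,S_1,\dots$ with $S_0={}\Rightarrow x_0:A_0$ and $S_k=\Gamma_k\Rightarrow\Delta_k$, write $\downarrow\Gamma_k$ ($\downarrow\Delta_k$) for the union of the antecedents (succedents) of $S_0,\dots,S_k$. Saturation conditions for $\Gamma\Rightarrow\Delta=S_k$ (with $\downarrow\Gamma,\downarrow\Delta$ the corresponding unions): L$\wedge$: $x:A\wedge B\in\downarrow\Gamma$ implies $x:A,x:B\in\downarrow\Gamma$; R$\wedge$: $x:A\wedge B\in\downarrow\Delta$ implies $x:A$ or $x:B$ in $\downarrow\Delta$; L$\vee$: $x:A\vee B\in\downarrow\Gamma$ implies $x:A$ or $x:B$ in $\downarrow\Gamma$; R$\vee$: $x:A\vee B\in\downarrow\Delta$ implies $x:A,x:B\in\downarrow\Delta$; L$\to$: $x:A\to B\in\downarrow\Gamma$ implies $x:B\in\downarrow\Gamma$ or $x:A\in\downarrow\Delta$; R$\to$: $x:A\to B\in\Delta$ implies $x:A\in\downarrow\Gamma$ and $x:B\in\downarrow\Delta$; Ref: if $a$ occurs in $\Gamma\cup\Delta$ then $a\subseteq a\in\Gamma$; Tr: $a\subseteq b,b\subseteq c\in\Gamma$ implies $a\subseteq c\in\Gamma$; L$\subseteq$: $x\in a,a\subseteq b\in\Gamma$ implies $x\in b\in\Gamma$; L$\forall$: $x\in a,a\Vdash^\forall A\in\Gamma$ implies $x:A\in\downarrow\Gamma$; R$\forall$: $a\Vdash^\forall A\in\downarrow\Delta$ implies for some $x$, $x\in a\in\Gamma$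 and $x:A\in\downarrow\Delta$; L$\exists$: $a\Vdash^\exists A\in\downarrow\Gamma$ implies for some $x$, $x\in a\in\Gamma$ and $x:A\in\downarrow\Gamma$; R$\exists$: $x\in a\in\Gamma$ and $a\Vdash^\exists A\in\Delta$ imply $x:A\in\downarrow\Delta$; R$>$: $x:A>B\in\downarrow\Delta$ implies for some $a$, $a\in N(x)\in\Gamma$, $a\Vdash^\exists A\in\downarrow\Gamma$, $x\Vdash_aA|B\in\Delta$; L$>^\star$: $a\in N(x),x:A>B\in\Gamma$ imply $a\Vdash^\exists A\in\downarrow\Delta$, or both $a\Vdash^\exists A$ and $x\Vdash_aA|B$ in $\downarrow\Gamma$; R$|$: $c\in N(x),c\subseteq a\in\Gamma$ and $x\Vdash_aA|B\in\Delta$ imply $c\Vdash^\exists A\in\Delta$ or $c\Vdash^\forall A\to B\in\downarrow\Delta$; L$|$: $x\Vdash_aA|B\in\downarrow\Gamma$ implies for some $c$, $c\in N(x),c\subseteq a\in\Gamma$, $c\Vdash^\exists A\in\downarrow\Gamma$ and $c\Vdash^\forall A\to B\in\Gamma$; Mon$\forall$: $b\subseteq a,a\Vdash^\forall A\in\Gamma$ imply $b\Vdash^\forall A\in\Gamma$. A sequent is saturated if no $x:p$ is in $\Gamma\cap\Delta$, no $x:\bot$ is in $\Gamma$, and it satisfies all these saturation conditions. Proof search strategy: (1) rules introducing a new label (R$\forall$, L$\exists$, R$>$, L$|$: dynamic rules) are applied only if no other (static) rule is applicable, except that R$>$ is applied before L$>^\star$; (2) a rule is not applied to a sequent that satisfies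 the saturation condition associated with that rule. *)

theory Defs
  imports Main "HOL-Library.Multiset"
begin

datatype fm = Atm nat | Bot | Conj fm fm | Disj fm fm | Imp fm fm | Cond fm fm

type_synonym wlab = nat
type_synonym nlab = nat

datatype lf =
    InN nlab wlab              (* a \<in> N(x)      : InN a x *)
  | Mem wlab nlab
  | Sub nlab nlab
  | Lab wlab fm
  | Exi nlab fm                (* a forces-exists A : Exi a A *)
  | Unv nlab fm                (* a forces-forall A : Unv a A *)
  | CondL wlab nlab fm fm      (* x forces_a A|B : CondL x a A B *)

type_synonym sequent = "lf multiset \<times> lf multiset"

fun wlabs :: "lf \<Rightarrow> wlab set" where
  "wlabs (InN a x) = {x}"
| "wlabs (Mem x a) = {x}"
| "wlabs (Sub a b) = {}"
| "wlabs (Lab x A) = {x}"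
| "wlabs (Exi a A) = {}"
| "wlabs (Unv a A) = {}"
| "wlabs (CondL x a A B) = {x}"

fun nlabs :: "lf \<Rightarrow> nlab set" where
  "nlabs (InN a x) = {a}"
| "nlabs (Mem x a) = {a}"
| "nlabs (Sub a b) = {a, b}"
| "nlabs (Lab x A) = {}"
| "nlabs (Exi a A) = {a}"
| "nlabs (Unv a A) = {a}"
| "nlabs (CondL x a A B) = {a}"

definition seq_wlabs :: "sequent \<Rightarrow> wlab set" where
  "seq_wlabs S = (\<Union>\<phi> \<in> set_mset (fst S) \<union> set_mset (snd S). wlabs \<phi>)"

definition seq_nlabs :: "sequent \<Rightarrow> nlab set" where
  "seq_nlabs S = (\<Union>\<phi> \<in> set_mset (fst S) \<union> set_mset (snd S). nlabs \<phi>)"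

text \<open>A branch prefix S_0, ..., S_k is represented by the (nonempty) list H = [S_0, ..., S_k];
  the current sequent is last H.\<close>

definition dG :: "sequent list \<Rightarrow> lf set" where
  "dG H = (\<Union>S \<in> set H. set_mset (fst S))"

definition dD :: "sequent list \<Rightarrow> lf set" where
  "dD H = (\<Union>S \<in> set H. set_mset (snd S))"

definition initial :: "sequent \<Rightarrow> bool" where
  "initial S \<longleftrightarrow> (\<exists>x p. Lab x (Atm p) \<in># fst S \<and> Lab x (Atm p) \<in># snd S) \<or> (\<exists>x. Lab x Bot \<in># fst S)"

datatype rname = LAnd | RAnd | LOr | ROr | LImp | RImp | LAll | RAll | LEx | REx
  | RCnd | LCndStar | RBar | LBar | Ref | Tr | LSub | MonAll

definition dynamic :: "rname \<Rightarrow> bool" where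
  "dynamic r \<longleftrightarrow> r \<in> {RAll, LEx, RCnd, LBar}"

text \<open>ap H r Ps: the rule r has an instance whose conclusion is the current sequent last H,
  whose premisses are Ps, and whose associated saturation condition (w.r.t. the branch H)
  is NOT satisfied, i.e. condition (2) of the strategy allows applying it.\<close>

inductive ap :: "sequent list \<Rightarrow> rname \<Rightarrow> sequent list \<Rightarrow> bool" where
  LAnd: "last H = (add_mset (Lab x (Conj A B)) G, D) \<Longrightarrow>
    \<not> (Lab x A \<in> dG H \<and> Lab x B \<in> dG H) \<Longrightarrow>
    ap H LAnd [(add_mset (Lab x A) (add_mset (Lab x B) G), D)]"
| RAnd: "last H = (G, add_mset (Lab x (Conj A B)) D) \<Longrightarrow>
    \<not> (Lab x A \<in> dD H \<or> Lab x B \<in> dD H) \<Longrightarrow>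
    ap H RAnd [(G, add_mset (Lab x A) D), (G, add_mset (Lab x B) D)]"
| LOr: "last H = (add_mset (Lab x (Disj A B)) G, D) \<Longrightarrow>
    \<not> (Lab x A \<in> dG H \<or> Lab x B \<in> dG H) \<Longrightarrow>
    ap H LOr [(add_mset (Lab x A) G, D), (add_mset (Lab x B) G, D)]"
| ROr: "last H = (G, add_mset (Lab x (Disj A B)) D) \<Longrightarrow>
    \<not> (Lab x A \<in> dD H \<and> Lab x B \<in> dD H) \<Longrightarrow>
    ap H ROr [(G, add_mset (Lab x A) (add_mset (Lab x B) D))]"
| LImp: "last H = (add_mset (Lab x (Imp A B)) G, D) \<Longrightarrow>
    \<not> (Lab x B \<in> dG H \<or> Lab x A \<in> dD H) \<Longrightarrow>
    ap H LImp [(G, add_mset (Lab x A) D), (add_mset (Lab x B) G, D)]"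
| RImp: "last H = (G, add_mset (Lab x (Imp A B)) D) \<Longrightarrow>
    \<not> (Lab x A \<in> dG H \<and> Lab x B \<in> dD H) \<Longrightarrow>
    ap H RImp [(add_mset (Lab x A) G, add_mset (Lab x B) D)]"
| LAll: "last H = (add_mset (Mem x a) (add_mset (Unv a A) G), D) \<Longrightarrow>
    \<not> (Lab x A \<in> dG H) \<Longrightarrow>
    ap H LAll [(add_mset (Lab x A) (add_mset (Mem x a) (add_mset (Unv a A) G)), D)]"
| RAll: "last H = (G, add_mset (Unv a A) D) \<Longrightarrow>
    x \<notin> seq_wlabs (last H) \<Longrightarrow>
    \<not> (\<exists>y. Mem y a \<in># G \<and> Lab y A \<in> dD H) \<Longrightarrow>
    ap H RAll [(add_mset (Mem x a) G, add_mset (Lab x A) D)]"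
| LEx: "last H = (add_mset (Exi a A) G, D) \<Longrightarrow>
    x \<notin> seq_wlabs (last H) \<Longrightarrow>
    \<not> (\<exists>y. Mem y a \<in># fst (last H) \<and> Lab y A \<in> dG H) \<Longrightarrow>
    ap H LEx [(add_mset (Mem x a) (add_mset (Lab x A) G), D)]"
| REx: "last H = (add_mset (Mem x a) G, add_mset (Exi a A) D) \<Longrightarrow>
    \<not> (Lab x A \<in> dD H) \<Longrightarrow>
    ap H REx [(add_mset (Mem x a) G, add_mset (Lab x A) (add_mset (Exi a A) D))]"
| RCnd: "last H = (G, add_mset (Lab x (Cond A B)) D) \<Longrightarrow>
    a \<notin> seq_nlabs (last H) \<Longrightarrow>
    \<not> (\<exists>b. InN b x \<in># fst (last H) \<and> Exi b A \<in> dG H \<and> CondL x b A B \<in># snd (last H)) \<Longrightarrow>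
    ap H RCnd [(add_mset (InN a x) (add_mset (Exi a A) G), add_mset (CondL x a A B) D)]"
| LCndStar: "last H = (add_mset (InN a x) (add_mset (Lab x (Cond A B)) G), D) \<Longrightarrow>
    \<not> (Exi a A \<in> dD H \<or> (Exi a A \<in> dG H \<and> CondL x a A B \<in> dG H)) \<Longrightarrow>
    ap H LCndStar
      [(add_mset (InN a x) (add_mset (Lab x (Cond A B)) G), add_mset (Exi a A) D),
       (add_mset (Exi a A) (add_mset (CondL x a A B) (add_mset (InN a x) (add_mset (Lab x (Cond A B)) G))), D)]"
| RBar: "last H = (add_mset (InN c x) (add_mset (Sub c a) G), add_mset (CondL x a A B) D) \<Longrightarrow>
    \<not> (Exi c A \<in># snd (last H) \<or> Unv c (Imp A B) \<in> dD H) \<Longrightarrow>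
    ap H RBar
      [(add_mset (InN c x) (add_mset (Sub c a) G), add_mset (CondL x a A B) (add_mset (Exi c A) D)),
       (add_mset (InN c x) (add_mset (Sub c a) G), add_mset (CondL x a A B) (add_mset (Unv c (Imp A B)) D))]"
| LBar: "last H = (add_mset (CondL x a A B) G, D) \<Longrightarrow>
    c \<notin> seq_nlabs (last H) \<Longrightarrow>
    \<not> (\<exists>d. InN d x \<in># fst (last H) \<and> Sub d a \<in># fst (last H) \<and> Exi d A \<in> dG H
           \<and> Unv d (Imp A B) \<in># fst (last H)) \<Longrightarrow>
    ap H LBar [(add_mset (InN c x) (add_mset (Sub c a) (add_mset (Exi c A) (add_mset (Unv c (Imp A B)) G))), D)]"
| Ref: "last H = (G, D) \<Longrightarrow>
    \<not> (a \<in> seq_nlabs (last H) \<longrightarrow> Sub a a \<in># G) \<Longrightarrow>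
    ap H Ref [(add_mset (Sub a a) G, D)]"
| Tr: "last H = (add_mset (Sub c b) (add_mset (Sub b a) G), D) \<Longrightarrow>
    \<not> (Sub c a \<in># fst (last H)) \<Longrightarrow>
    ap H Tr [(add_mset (Sub c a) (add_mset (Sub c b) (add_mset (Sub b a) G)), D)]"
| LSub: "last H = (add_mset (Mem x a) (add_mset (Sub a b) G), D) \<Longrightarrow>
    \<not> (Mem x b \<in># fst (last H)) \<Longrightarrow>
    ap H LSub [(add_mset (Mem x a) (add_mset (Sub a b) (add_mset (Mem x b) G)), D)]"
| MonAll: "last H = (add_mset (Sub b a) (add_mset (Unv a A) G), D) \<Longrightarrow>
    \<not> (Unv b A \<in># fst (last H)) \<Longrightarrow>
    ap H MonAll [(add_mset (Sub b a) (add_mset (Unv b A) (add_mset (Unv a A) G)), D)]"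

text \<open>step H r Ps: in root-first proof search, having built the branch H (whose last element is
  the current, non-initial, sequent), rule r may be applied with premisses Ps according to the strategy:
  (1) dynamic rules only if no static rule is applicable, except that R> is applied before L>*
  (R> only waits for static rules other than L>*, and L>* is not applied while R> is applicable);
  (2) the rule instance does not satisfy its associated saturation condition (built into ap).\<close>

definition step :: "sequent list \<Rightarrow> rname \<Rightarrow> sequent list \<Rightarrow> bool" where
  "step H r Ps \<longleftrightarrow>
     \<not> initial (last H) \<and> ap H r Ps \<and>
     (dynamic r \<and> r \<noteq> RCnd \<longrightarrow> \<not> (\<exists>r' Ps'. \<not> dynamic r' \<and> ap H r' Ps')) \<and>
     (r = RCnd \<longrightarrow> \<not> (\<exists>r' Ps'. \<not> dynamic r' \<and> r' \<noteq> LCndStar \<and> ap H r' Ps')) \<and>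
     (r = LCndStar \<longrightarrow> \<not> (\<exists>Ps'. ap H RCnd Ps'))"

definition root :: "wlab \<Rightarrow> fm \<Rightarrow> sequent" where
  "root x0 A0 = ({#}, {#Lab x0 A0#})"

inductive branch :: "wlab \<Rightarrow> fm \<Rightarrow> sequent list \<Rightarrow> bool" for x0 A0 where
  start: "branch x0 A0 [root x0 A0]"
| extend: "branch x0 A0 H \<Longrightarrow> step H r Ps \<Longrightarrow> S \<in> set Ps \<Longrightarrow> branch x0 A0 (H @ [S])"

definition saturated :: "sequent list \<Rightarrow> bool" where
  "saturated H \<longleftrightarrow> (let \<Gamma> = fst (last H); \<Delta> = snd (last H) in
     \<not> (\<exists>x p. Lab x (Atm p) \<in># \<Gamma> \<and> Lab x (Atm p) \<in># \<Delta>) \<and>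
     (\<forall>x. Lab x Bot \<notin># \<Gamma>) \<and>
     (\<forall>x A B. Lab x (Conj A B) \<in> dG H \<longrightarrow> Lab x A \<in> dG H \<and> Lab x B \<in> dG H) \<and>
     (\<forall>x A B. Lab x (Conj A B) \<in> dD H \<longrightarrow> Lab x A \<in> dD H \<or> Lab x B \<in> dD H) \<and>
     (\<forall>x A B. Lab x (Disj A B) \<in> dG H \<longrightarrow> Lab x A \<in> dG H \<or> Lab x B \<in> dG H) \<and>
     (\<forall>x A B. Lab x (Disj A B) \<in> dD H \<longrightarrow> Lab x A \<in> dD H \<and> Lab x B \<in> dD H) \<and>
     (\<forall>x A B. Lab x (Imp A B) \<in> dG H \<longrightarrow> Lab x B \<in> dG H \<or> Lab x A \<in> dD H) \<and>
     (\<forall>x A B. Lab x (Imp A B) \<in># \<Delta> \<longrightarrow> Lab x A \<in> dG H \<and> Lab x B \<in> dD H) \<and>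
     (\<forall>a. a \<in> seq_nlabs (last H) \<longrightarrow> Sub a a \<in># \<Gamma>) \<and>
     (\<forall>a b c. Sub a b \<in># \<Gamma> \<and> Sub b c \<in># \<Gamma> \<longrightarrow> Sub a c \<in># \<Gamma>) \<and>
     (\<forall>x a b. Mem x a \<in># \<Gamma> \<and> Sub a b \<in># \<Gamma> \<longrightarrow> Mem x b \<in># \<Gamma>) \<and>
     (\<forall>x a A. Mem x a \<in># \<Gamma> \<and> Unv a A \<in># \<Gamma> \<longrightarrow> Lab x A \<in> dG H) \<and>
     (\<forall>a A. Unv a A \<in> dD H \<longrightarrow> (\<exists>x. Mem x a \<in># \<Gamma> \<and> Lab x A \<in> dD H)) \<and>
     (\<forall>a A. Exi a A \<in> dG H \<longrightarrow> (\<exists>x. Mem x a \<in># \<Gamma> \<and> Lab x A \<in> dG H)) \<and>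
     (\<forall>x a A. Mem x a \<in># \<Gamma> \<and> Exi a A \<in># \<Delta> \<longrightarrow> Lab x A \<in> dD H) \<and>
     (\<forall>x A B. Lab x (Cond A B) \<in> dD H \<longrightarrow>
        (\<exists>a. InN a x \<in># \<Gamma> \<and> Exi a A \<in> dG H \<and> CondL x a A B \<in># \<Delta>)) \<and>
     (\<forall>a x A B. InN a x \<in># \<Gamma> \<and> Lab x (Cond A B) \<in># \<Gamma> \<longrightarrow>
        Exi a A \<in> dD H \<or> (Exi a A \<in> dG H \<and> CondL x a A B \<in> dG H)) \<and>
     (\<forall>c x a A B. InN c x \<in># \<Gamma> \<and> Sub c a \<in># \<Gamma> \<and> CondL x a A B \<in># \<Delta> \<longrightarrow>
        Exi c A \<in># \<Delta> \<or> Unv c (Imp A B) \<in> dD H) \<and>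
     (\<forall>x a A B. CondL x a A B \<in> dG H \<longrightarrow>
        (\<exists>c. InN c x \<in># \<Gamma> \<and> Sub c a \<in># \<Gamma> \<and> Exi c A \<in> dG H \<and> Unv c (Imp A B) \<in># \<Gamma>)) \<and>
     (\<forall>a b A. Sub b a \<in># \<Gamma> \<and> Unv a A \<in># \<Gamma> \<longrightarrow> Unv b A \<in># \<Gamma>))"

end

theory Submission
  imports Defs "HOL-Library.Countable"
begin

fun sf :: "fm \<Rightarrow> fm set" where
  "sf (Atm p) = {Atm p}"
| "sf Bot = {Bot}"
| "sf (Conj A B) = insert (Conj A B) (sf A \<union> sf B)"
| "sf (Disj A B) = insert (Disj A B) (sf A \<union> sf B)"
| "sf (Imp A B) = insert (Imp A B) (sf A \<union> sf B)"
| "sf (Cond A B) = insert (Cond A B) (sf A \<union> sf B)"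

lemma sf_refl: "A \<in> sf A" by (cases A) auto
lemma sf_trans: "B \<in> sf A \<Longrightarrow> sf B \<subseteq> sf A" by (induct A) auto
lemma finite_sf: "finite (sf A)" by (induct A) auto

definition clo :: "fm \<Rightarrow> fm set" where
  "clo A0 = sf A0 \<union> {Imp A B | A B. Cond A B \<in> sf A0}"

lemma finite_clo: "finite (clo A0)"
proof -
  have "{Imp A B | A B. Cond A B \<in> sf A0} \<subseteq> (\<lambda>F. case F of Cond A B \<Rightarrow> Imp A B | _ \<Rightarrow> F) ` sf A0"
    by (auto intro!: image_eqI)
  then show ?thesis unfolding clo_def using finite_sf finite_subset by blast
qed

lemma clo_Conj: "Conj A B \<in> clo A0 \<Longrightarrow> A \<in> clo A0 \<and> B \<in> clo A0"
  unfolding clo_def using sf_trans sf_refl by fastforce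
lemma clo_Disj: "Disj A B \<in> clo A0 \<Longrightarrow> A \<in> clo A0 \<and> B \<in> clo A0"
  unfolding clo_def using sf_trans sf_refl by fastforce
lemma clo_Imp: "Imp A B \<in> clo A0 \<Longrightarrow> A \<in> clo A0 \<and> B \<in> clo A0"
  unfolding clo_def using sf_trans sf_refl by fastforce
lemma clo_Cond: "Cond A B \<in> clo A0 \<Longrightarrow> A \<in> clo A0 \<and> B \<in> clo A0 \<and> Imp A B \<in> clo A0"
  unfolding clo_def using sf_trans sf_refl by fastforce
lemma clo_A0: "A0 \<in> clo A0" unfolding clo_def using sf_refl by auto

fun deg :: "fm \<Rightarrow> nat" where
  "deg (Atm p) = 0"
| "deg Bot = 0"
| "deg (Conj A B) = max (deg A) (deg B)"
| "deg (Disj A B) = max (deg A) (deg B)"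
| "deg (Imp A B) = max (deg A) (deg B)"
| "deg (Cond A B) = Suc (max (deg A) (deg B))"

fun lfms :: "lf \<Rightarrow> fm set" where
  "lfms (InN a x) = {}"
| "lfms (Mem x a) = {}"
| "lfms (Sub a b) = {}"
| "lfms (Lab x A) = {A}"
| "lfms (Exi a A) = {A}"
| "lfms (Unv a A) = {A}"
| "lfms (CondL x a A B) = {Cond A B}"

datatype key = KE fm | KA fm | KR fm fm | KL fm fm

instance fm :: countable by countable_datatype
instance key :: countable by countable_datatype

fun isKL :: "key \<Rightarrow> bool" where
  "isKL (KL A B) = True" | "isKL _ = False"

fun trr :: "key list \<Rightarrow> (fm \<times> fm) list" where
  "trr [] = []"
| "trr (KL A B # r) = (A, B) # trr r"
| "trr (KE A # r) = []"
| "trr (KA A # r) = []"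
| "trr (KR A B # r) = []"

definition trl :: "key list \<Rightarrow> (fm \<times> fm) list" where "trl p = trr (rev p)"
definition wt :: "key list \<Rightarrow> nat" where "wt p = length (filter (\<lambda>k. \<not> isKL k) p)"

definition keys :: "fm set \<Rightarrow> key set" where
  "keys C = KE ` C \<union> KA ` C \<union> case_prod KR ` (C \<times> C) \<union> case_prod KL ` (C \<times> C)"

definition good :: "fm set \<Rightarrow> key list \<Rightarrow> bool" where
  "good C p \<longleftrightarrow> set p \<subseteq> keys C \<and> (\<forall>n \<le> length p. distinct (trl (take n p)))"

lemma trl_simps[simp]:
  "trl [] = []"
  "trl (p @ [KL A B]) = (A, B) # trl p"
  "trl (p @ [KE A]) = []" "trl (p @ [KA A]) = []" "trl (p @ [KR A B]) = []"
  by (simp_all add: trl_def)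

lemma wt_simps[simp]:
  "wt [] = 0"
  "wt (p @ [KL A B]) = wt p"
  "wt (p @ [KE A]) = Suc (wt p)" "wt (p @ [KA A]) = Suc (wt p)" "wt (p @ [KR A B]) = Suc (wt p)"
  by (simp_all add: wt_def)

lemma keys_simps[simp]:
  "KE A \<in> keys C \<longleftrightarrow> A \<in> C" "KA A \<in> keys C \<longleftrightarrow> A \<in> C"
  "KR A B \<in> keys C \<longleftrightarrow> A \<in> C \<and> B \<in> C" "KL A B \<in> keys C \<longleftrightarrow> A \<in> C \<and> B \<in> C"
  by (auto simp: keys_def)

lemma finite_keys: "finite C \<Longrightarrow> finite (keys C)" by (simp add: keys_def)

lemma good_Nil[simp]: "good C []" by (simp add: good_def)

lemma good_snoc: "good C (p @ [k]) \<longleftrightarrow> good C p \<and> k \<in> keys C \<and> distinct (trl (p @ [k]))"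
proof -
  have "(\<forall>n \<le> length (p @ [k]). distinct (trl (take n (p @ [k])))) \<longleftrightarrow>
        (\<forall>n \<le> length p. distinct (trl (take n p))) \<and> distinct (trl (p @ [k]))"
    by (auto simp: le_Suc_eq)
  then show ?thesis by (auto simp: good_def)
qed

lemma set_trr: "set (trr p) \<subseteq> {(A, B). KL A B \<in> set p}"
  by (induct p rule: trr.induct) auto

lemma length_bound:
  assumes "\<forall>n \<le> length p. length (trl (take n p)) \<le> M"
  shows "length p \<le> wt p * (M + 1) + length (trl p)"
  using assms
proof (induct p rule: rev_induct)
  case Nil then show ?case by simp
next
  case (snoc k p)
  have h: "\<forall>n \<le> length p. length (trl (take n p)) \<le> M"
  proof (intro allI impI)
    fix n assume "n \<le> length p"
    then have "take n (p @ [k]) = take n p" by simp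
    then show "length (trl (take n p)) \<le> M" using snoc.prems \<open>n \<le> length p\<close> by (metis le_Suc_eq length_append_singleton)
  qed
  have ih: "length p \<le> wt p * (M + 1) + length (trl p)" using snoc.hyps h by blast
  have tp: "length (trl p) \<le> M" using h by (metis order_refl take_all)
  show ?case using ih tp by (cases k) auto
qed

lemma good_length:
  assumes "good C p" and that: "finite C"
  shows "length p \<le> wt p * (card (C \<times> C) + 1) + card (C \<times> C)"
proof -
  have "\<forall>n \<le> length p. length (trl (take n p)) \<le> card (C \<times> C)"
  proof (intro allI impI)
    fix n assume "n \<le> length p"
    then have d: "distinct (trl (take n p))" using assms by (simp add: good_def)
    have "set (trl (take n p)) \<subseteq> C \<times> C"
    proof
      fix z assume "z \<in> set (trl (take n p))"
      then obtain A B where z: "z = (A, B)" "KL A B \<in> set (rev (take n p))"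
        using set_trr unfolding trl_def by fastforce
      then have "KL A B \<in> set p" by (metis in_set_takeD set_rev)
      then have "KL A B \<in> keys C" using assms by (auto simp: good_def)
      then show "z \<in> C \<times> C" using z by simp
    qed
    then show "length (trl (take n p)) \<le> card (C \<times> C)"
      using d distinct_card card_mono that by (metis finite_SigmaI)
  qed
  from length_bound[OF this] show ?thesis
    using \<open>\<forall>n\<le>length p. _\<close> by (metis add_le_cancel_left le_trans order_refl take_all)
qed

fun rl :: "(nat \<Rightarrow> nat) \<Rightarrow> (nat \<Rightarrow> nat) \<Rightarrow> lf \<Rightarrow> lf" where
  "rl s t (InN a x) = InN (t a) (s x)"
| "rl s t (Mem x a) = Mem (s x) (t a)"
| "rl s t (Sub a b) = Sub (t a) (t b)"
| "rl s t (Lab x A) = Lab (s x) A"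
| "rl s t (Exi a A) = Exi (t a) A"
| "rl s t (Unv a A) = Unv (t a) A"
| "rl s t (CondL x a A B) = CondL (s x) (t a) A B"

lemma rl_labs: "wlabs (rl s t \<phi>) = s ` wlabs \<phi>" "nlabs (rl s t \<phi>) = t ` nlabs \<phi>" "lfms (rl s t \<phi>) = lfms \<phi>"
  by (cases \<phi>; simp)+

lemma rl_inj:
  assumes "inj_on s W" "inj_on t N" "wlabs \<phi> \<subseteq> W" "nlabs \<phi> \<subseteq> N" "wlabs \<psi> \<subseteq> W" "nlabs \<psi> \<subseteq> N"
    and "rl s t \<phi> = rl s t \<psi>"
  shows "\<phi> = \<psi>"
  using assms by (cases \<phi>; cases \<psi>; simp; meson inj_onD insert_subset)

definition AF :: "nat set \<Rightarrow> fm set \<Rightarrow> lf set" where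
  "AF E C = {\<phi>. wlabs \<phi> \<subseteq> E \<and> nlabs \<phi> \<subseteq> E \<and> lfms \<phi> \<subseteq> C}"

lemma finite_AF:
  assumes "finite E" "finite C" "\<And>A B. Cond A B \<in> C \<Longrightarrow> A \<in> C \<and> B \<in> C"
  shows "finite (AF E C)"
proof -
  define U where "U = (\<lambda>(a,x). InN a x) ` (E \<times> E) \<union> (\<lambda>(x,a). Mem x a) ` (E \<times> E) \<union> (\<lambda>(a,b). Sub a b) ` (E \<times> E)
     \<union> (\<lambda>(x,A). Lab x A) ` (E \<times> C) \<union> (\<lambda>(a,A). Exi a A) ` (E \<times> C) \<union> (\<lambda>(a,A). Unv a A) ` (E \<times> C)
     \<union> (\<lambda>(x,a,A,B). CondL x a A B) ` (E \<times> E \<times> C \<times> C)"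
  have "AF E C \<subseteq> U"
  proof
    fix \<phi> assume "\<phi> \<in> AF E C"
    then show "\<phi> \<in> U"
    proof (cases \<phi>)
      case (InN a x) then show ?thesis using \<open>\<phi> \<in> AF E C\<close> unfolding U_def AF_def
        by (intro UnI1 UnI1 UnI1 UnI1 UnI1 UnI1 rev_image_eqI[of "(a,x)"]) auto
    next
      case (Mem x a) then show ?thesis using \<open>\<phi> \<in> AF E C\<close> unfolding U_def AF_def
        by (intro UnI1 UnI1 UnI1 UnI1 UnI1 UnI2 rev_image_eqI[of "(x,a)"]) auto
    next
      case (Sub a b) then show ?thesis using \<open>\<phi> \<in> AF E C\<close> unfolding U_def AF_def
        by (intro UnI1 UnI1 UnI1 UnI1 UnI2 rev_image_eqI[of "(a,b)"]) auto
    next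
      case (Lab x A) then show ?thesis using \<open>\<phi> \<in> AF E C\<close> unfolding U_def AF_def
        by (intro UnI1 UnI1 UnI1 UnI2 rev_image_eqI[of "(x,A)"]) auto
    next
      case (Exi a A) then show ?thesis using \<open>\<phi> \<in> AF E C\<close> unfolding U_def AF_def
        by (intro UnI1 UnI1 UnI2 rev_image_eqI[of "(a,A)"]) auto
    next
      case (Unv a A) then show ?thesis using \<open>\<phi> \<in> AF E C\<close> unfolding U_def AF_def
        by (intro UnI1 UnI2 rev_image_eqI[of "(a,A)"]) auto
    next
      case (CondL x a A B) then show ?thesis using \<open>\<phi> \<in> AF E C\<close> assms(3)[of A B] unfolding U_def AF_def
        by (intro UnI2 rev_image_eqI[of "(x,a,A,B)"]) auto
    qed
  qed
  moreover have "finite U" using assms(1,2) unfolding U_def by auto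
  ultimately show ?thesis using finite_subset by blast
qed

definition facts :: "sequent list \<Rightarrow> (bool \<times> lf) set" where
  "facts H = Pair True ` dG H \<union> Pair False ` dD H"

lemma dG_snoc[simp]: "dG (H @ [S]) = dG H \<union> set_mset (fst S)" by (auto simp: dG_def)
lemma dD_snoc[simp]: "dD (H @ [S]) = dD H \<union> set_mset (snd S)" by (auto simp: dD_def)
lemma dG_single[simp]: "dG [S] = set_mset (fst S)" by (auto simp: dG_def)
lemma dD_single[simp]: "dD [S] = set_mset (snd S)" by (auto simp: dD_def)

lemma finite_dG: "finite (dG H)" by (auto simp: dG_def)
lemma finite_dD: "finite (dD H)" by (auto simp: dD_def)
lemma finite_facts: "finite (facts H)" by (simp add: facts_def finite_dG finite_dD)

lemma last_dG: "H \<noteq> [] \<Longrightarrow> \<phi> \<in># fst (last H) \<Longrightarrow> \<phi> \<in> dG H"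
  by (auto simp: dG_def)
lemma last_dD: "H \<noteq> [] \<Longrightarrow> \<phi> \<in># snd (last H) \<Longrightarrow> \<phi> \<in> dD H"
  by (auto simp: dD_def)

lemma seq_wlabs_simps[simp]:
  "seq_wlabs (add_mset \<phi> G, D) = wlabs \<phi> \<union> seq_wlabs (G, D)"
  "seq_wlabs (G, add_mset \<phi> D) = wlabs \<phi> \<union> seq_wlabs (G, D)"
  "seq_wlabs ({#}, {#}) = {}"
  by (auto simp: seq_wlabs_def)
lemma seq_nlabs_simps[simp]:
  "seq_nlabs (add_mset \<phi> G, D) = nlabs \<phi> \<union> seq_nlabs (G, D)"
  "seq_nlabs (G, add_mset \<phi> D) = nlabs \<phi> \<union> seq_nlabs (G, D)"
  "seq_nlabs ({#}, {#}) = {}"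
  by (auto simp: seq_nlabs_def)

lemma finite_wlabs: "finite (wlabs \<phi>)" by (cases \<phi>) auto
lemma finite_nlabs: "finite (nlabs \<phi>)" by (cases \<phi>) auto
lemma finite_seq_wlabs: "finite (seq_wlabs S)" by (auto simp: seq_wlabs_def finite_wlabs)
lemma finite_seq_nlabs: "finite (seq_nlabs S)" by (auto simp: seq_nlabs_def finite_nlabs)

lemma in_seq_wlabs: "\<phi> \<in># fst S \<or> \<phi> \<in># snd S \<Longrightarrow> y \<in> wlabs \<phi> \<Longrightarrow> y \<in> seq_wlabs S"
  by (auto simp: seq_wlabs_def)
lemma in_seq_nlabs: "\<phi> \<in># fst S \<or> \<phi> \<in># snd S \<Longrightarrow> y \<in> nlabs \<phi> \<Longrightarrow> y \<in> seq_nlabs S"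
  by (auto simp: seq_nlabs_def)

fun persL :: "lf \<Rightarrow> bool" where
  "persL (InN a x) = True" | "persL (Mem x a) = True" | "persL (Sub a b) = True" | "persL (Unv a A) = True"
| "persL _ = False"
fun persR :: "lf \<Rightarrow> bool" where
  "persR (Exi a A) = True" | "persR (CondL x a A B) = True" | "persR _ = False"

lemma ap_persL: "ap H r Ps \<Longrightarrow> S \<in> set Ps \<Longrightarrow> \<phi> \<in># fst (last H) \<Longrightarrow> persL \<phi> \<Longrightarrow> \<phi> \<in># fst S"
  by (induct rule: ap.cases) auto

lemma ap_persR: "ap H r Ps \<Longrightarrow> S \<in> set Ps \<Longrightarrow> \<phi> \<in># snd (last H) \<Longrightarrow> persR \<phi> \<Longrightarrow> \<phi> \<in># snd S"
  by (induct rule: ap.cases) auto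

lemma ap_wlabs: "ap H r Ps \<Longrightarrow> S \<in> set Ps \<Longrightarrow> seq_wlabs (last H) \<subseteq> seq_wlabs S"
  by (induct rule: ap.cases) auto

lemma ap_nlabs: "ap H r Ps \<Longrightarrow> S \<in> set Ps \<Longrightarrow> seq_nlabs (last H) \<subseteq> seq_nlabs S"
  by (induct rule: ap.cases) auto

lemma ap_static_wlabs: "ap H r Ps \<Longrightarrow> S \<in> set Ps \<Longrightarrow> \<not> dynamic r \<Longrightarrow> seq_wlabs S \<subseteq> seq_wlabs (last H)"
  by (induct rule: ap.cases) (auto simp: dynamic_def)

lemma ap_static_nlabs: "ap H r Ps \<Longrightarrow> S \<in> set Ps \<Longrightarrow> \<not> dynamic r \<Longrightarrow> seq_nlabs S \<subseteq> seq_nlabs (last H)"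
  by (induct rule: ap.cases) (auto simp: dynamic_def)

lemma ap_lfms0: "ap H r Ps \<Longrightarrow>
   (\<forall>\<phi>\<in># fst (last H). lfms \<phi> \<subseteq> clo A0) \<Longrightarrow> (\<forall>\<phi>\<in># snd (last H). lfms \<phi> \<subseteq> clo A0) \<Longrightarrow>
   \<forall>S \<in> set Ps. (\<forall>\<phi>\<in># fst S. lfms \<phi> \<subseteq> clo A0) \<and> (\<forall>\<phi>\<in># snd S. lfms \<phi> \<subseteq> clo A0)"
  by (induct rule: ap.cases) (simp_all, (blast dest: clo_Conj clo_Disj clo_Imp clo_Cond)+)

lemma ap_lfms: "ap H r Ps \<Longrightarrow> S \<in> set Ps \<Longrightarrow>
   (\<forall>\<phi>\<in># fst (last H). lfms \<phi> \<subseteq> clo A0) \<Longrightarrow> (\<forall>\<phi>\<in># snd (last H). lfms \<phi> \<subseteq> clo A0) \<Longrightarrow>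
   (\<forall>\<phi>\<in># fst S. lfms \<phi> \<subseteq> clo A0) \<and> (\<forall>\<phi>\<in># snd S. lfms \<phi> \<subseteq> clo A0)"
  using ap_lfms0 by blast

lemma ap_InN: "ap H r Ps \<Longrightarrow> S \<in> set Ps \<Longrightarrow> InN c x \<in># fst S \<Longrightarrow> InN c x \<notin># fst (last H) \<Longrightarrow>
   c \<notin> seq_nlabs (last H) \<and> (\<forall>x'. InN c x' \<in># fst S \<longrightarrow> x' = x)"
  by (induct rule: ap.cases) (auto simp: seq_nlabs_def)

lemma ap_CondL: "ap H r Ps \<Longrightarrow> S \<in> set Ps \<Longrightarrow> CondL x d A B \<in># fst S \<Longrightarrow> CondL x d A B \<notin># fst (last H) \<Longrightarrow>
   InN d x \<in># fst S \<and> Exi d A \<in># fst S"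
  by (induct rule: ap.cases) auto

fun remL :: "lf \<Rightarrow> sequent \<Rightarrow> bool" where
  "remL (Lab x (Conj A B)) S = (Lab x A \<in># fst S \<and> Lab x B \<in># fst S)"
| "remL (Lab x (Disj A B)) S = (Lab x A \<in># fst S \<or> Lab x B \<in># fst S)"
| "remL (Lab x (Imp A B)) S = (Lab x B \<in># fst S \<or> Lab x A \<in># snd S)"
| "remL (Exi a A) S = (\<exists>x. Mem x a \<in># fst S \<and> Lab x A \<in># fst S)"
| "remL (CondL x a A B) S = (\<exists>c. InN c x \<in># fst S \<and> Sub c a \<in># fst S \<and> Exi c A \<in># fst S \<and> Unv c (Imp A B) \<in># fst S)"
| "remL _ S = False"

fun remR :: "lf \<Rightarrow> sequent \<Rightarrow> bool" where
  "remR (Lab x (Conj A B)) S = (Lab x A \<in># snd S \<or> Lab x B \<in># snd S)"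
| "remR (Lab x (Disj A B)) S = (Lab x A \<in># snd S \<and> Lab x B \<in># snd S)"
| "remR (Lab x (Imp A B)) S = (Lab x A \<in># fst S \<and> Lab x B \<in># snd S)"
| "remR (Unv a A) S = (\<exists>x. Mem x a \<in># fst S \<and> Lab x A \<in># snd S)"
| "remR (Lab x (Cond A B)) S = (\<exists>a. InN a x \<in># fst S \<and> Exi a A \<in># fst S \<and> CondL x a A B \<in># snd S)"
| "remR _ S = False"

lemma ap_remL: "ap H r Ps \<Longrightarrow> S \<in> set Ps \<Longrightarrow> \<phi> \<in># fst (last H) \<Longrightarrow> \<phi> \<notin># fst S \<Longrightarrow> remL \<phi> S"
  by (induct rule: ap.cases) auto

lemma ap_remR: "ap H r Ps \<Longrightarrow> S \<in> set Ps \<Longrightarrow> \<phi> \<in># snd (last H) \<Longrightarrow> \<phi> \<notin># snd S \<Longrightarrow> remR \<phi> S"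
  by (induct rule: ap.cases) auto

definition BI :: "fm \<Rightarrow> sequent list \<Rightarrow> bool" where
 "BI A0 H \<longleftrightarrow> H \<noteq> [] \<and>
  (\<forall>\<phi> \<in> dG H \<union> dD H. wlabs \<phi> \<subseteq> seq_wlabs (last H) \<and> nlabs \<phi> \<subseteq> seq_nlabs (last H)) \<and>
  (\<forall>\<phi> \<in> dG H. persL \<phi> \<longrightarrow> \<phi> \<in># fst (last H)) \<and>
  (\<forall>\<phi> \<in> dD H. persR \<phi> \<longrightarrow> \<phi> \<in># snd (last H)) \<and>
  (\<forall>\<phi> \<in> dG H \<union> dD H. lfms \<phi> \<subseteq> clo A0) \<and>
  (\<forall>c x x'. InN c x \<in> dG H \<longrightarrow> InN c x' \<in> dG H \<longrightarrow> x = x') \<and>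
  (\<forall>x d A B. CondL x d A B \<in> dG H \<longrightarrow> InN d x \<in> dG H \<and> Exi d A \<in> dG H)"

lemma BI_root: "BI A0 [root x0 A0]"
  by (auto simp: BI_def root_def seq_wlabs_def seq_nlabs_def clo_A0)

lemma BI_step:
  assumes bi: "BI A0 H" and ap: "ap H r Ps" and S: "S \<in> set Ps"
  shows "BI A0 (H @ [S])"
proof -
  have ne: "H \<noteq> []" using bi by (simp add: BI_def)
  have b1: "\<forall>\<phi> \<in> dG H \<union> dD H. wlabs \<phi> \<subseteq> seq_wlabs (last H) \<and> nlabs \<phi> \<subseteq> seq_nlabs (last H)"
   and b2: "\<forall>\<phi> \<in> dG H. persL \<phi> \<longrightarrow> \<phi> \<in># fst (last H)"
   and b3: "\<forall>\<phi> \<in> dD H. persR \<phi> \<longrightarrow> \<phi> \<in># snd (last H)"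
   and b4: "\<forall>\<phi> \<in> dG H \<union> dD H. lfms \<phi> \<subseteq> clo A0"
   and b5: "\<forall>c x x'. InN c x \<in> dG H \<longrightarrow> InN c x' \<in> dG H \<longrightarrow> x = x'"
   and b6: "\<forall>x d A B. CondL x d A B \<in> dG H \<longrightarrow> InN d x \<in> dG H \<and> Exi d A \<in> dG H"
    using bi by (simp_all add: BI_def)
  have wl: "seq_wlabs (last H) \<subseteq> seq_wlabs S" using ap_wlabs[OF ap S] .
  have nl: "seq_nlabs (last H) \<subseteq> seq_nlabs S" using ap_nlabs[OF ap S] .
  have c1: "\<forall>\<phi> \<in> dG (H @ [S]) \<union> dD (H @ [S]). wlabs \<phi> \<subseteq> seq_wlabs (last (H @ [S])) \<and> nlabs \<phi> \<subseteq> seq_nlabs (last (H @ [S]))"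
  proof
    fix \<phi> assume "\<phi> \<in> dG (H @ [S]) \<union> dD (H @ [S])"
    then have "\<phi> \<in> dG H \<union> dD H \<or> \<phi> \<in># fst S \<or> \<phi> \<in># snd S" by auto
    then show "wlabs \<phi> \<subseteq> seq_wlabs (last (H @ [S])) \<and> nlabs \<phi> \<subseteq> seq_nlabs (last (H @ [S]))"
      using b1 wl nl in_seq_wlabs[of \<phi> S] in_seq_nlabs[of \<phi> S] unfolding last_snoc by blast
  qed
  have c2: "\<forall>\<phi> \<in> dG (H @ [S]). persL \<phi> \<longrightarrow> \<phi> \<in># fst (last (H @ [S]))"
    using b2 ap_persL[OF ap S] by auto
  have c3: "\<forall>\<phi> \<in> dD (H @ [S]). persR \<phi> \<longrightarrow> \<phi> \<in># snd (last (H @ [S]))"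
    using b3 ap_persR[OF ap S] by auto
  have "(\<forall>\<phi>\<in># fst S. lfms \<phi> \<subseteq> clo A0) \<and> (\<forall>\<phi>\<in># snd S. lfms \<phi> \<subseteq> clo A0)"
    using ap_lfms[OF ap S] b4 last_dG[OF ne] last_dD[OF ne] by blast
  then have c4: "\<forall>\<phi> \<in> dG (H @ [S]) \<union> dD (H @ [S]). lfms \<phi> \<subseteq> clo A0"
    using b4 by auto
  have c5: "\<forall>c x x'. InN c x \<in> dG (H @ [S]) \<longrightarrow> InN c x' \<in> dG (H @ [S]) \<longrightarrow> x = x'"
  proof (intro allI impI)
    fix c x x' assume a1: "InN c x \<in> dG (H @ [S])" and a2: "InN c x' \<in> dG (H @ [S])"
    have old: "InN c y \<in> dG H \<Longrightarrow> c \<in> seq_nlabs (last H)" for y using b1 by (metis UnI1 insertI1 nlabs.simps(1) subset_iff)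
    have new: "InN c y \<in># fst S \<Longrightarrow> InN c y \<in> dG H \<or> (c \<notin> seq_nlabs (last H) \<and> (\<forall>x'. InN c x' \<in># fst S \<longrightarrow> x' = y))" for y
      using ap_InN[OF ap S, of c y] last_dG[OF ne] by blast
    have A: "InN c x \<in> dG H \<or> InN c x \<in># fst S" using a1 by simp
    have B: "InN c x' \<in> dG H \<or> InN c x' \<in># fst S" using a2 by simp
    show "x = x'" using A B old[of x] old[of x'] new[of x] new[of x'] b5 by blast
  qed
  have c6: "\<forall>x d A B. CondL x d A B \<in> dG (H @ [S]) \<longrightarrow> InN d x \<in> dG (H @ [S]) \<and> Exi d A \<in> dG (H @ [S])"
  proof (intro allI impI)
    fix x d A B assume "CondL x d A B \<in> dG (H @ [S])"
    then consider "CondL x d A B \<in> dG H" | "CondL x d A B \<in># fst S" "CondL x d A B \<notin># fst (last H)"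
      using last_dG[OF ne] by auto
    then show "InN d x \<in> dG (H @ [S]) \<and> Exi d A \<in> dG (H @ [S])"
      using b6 ap_CondL[OF ap S] by cases auto
  qed
  show ?thesis unfolding BI_def using c1 c2 c3 c4 c5 c6 by simp
qed

fun remLH :: "lf \<Rightarrow> sequent list \<Rightarrow> bool" where
  "remLH (Lab x (Conj A B)) H = (Lab x A \<in> dG H \<and> Lab x B \<in> dG H)"
| "remLH (Lab x (Disj A B)) H = (Lab x A \<in> dG H \<or> Lab x B \<in> dG H)"
| "remLH (Lab x (Imp A B)) H = (Lab x B \<in> dG H \<or> Lab x A \<in> dD H)"
| "remLH (Exi a A) H = (\<exists>x. Mem x a \<in> dG H \<and> Lab x A \<in> dG H)"
| "remLH (CondL x a A B) H = (\<exists>c. InN c x \<in> dG H \<and> Sub c a \<in> dG H \<and> Exi c A \<in> dG H \<and> Unv c (Imp A B) \<in> dG H)"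
| "remLH _ H = False"

fun remRH :: "lf \<Rightarrow> sequent list \<Rightarrow> bool" where
  "remRH (Lab x (Conj A B)) H = (Lab x A \<in> dD H \<or> Lab x B \<in> dD H)"
| "remRH (Lab x (Disj A B)) H = (Lab x A \<in> dD H \<and> Lab x B \<in> dD H)"
| "remRH (Lab x (Imp A B)) H = (Lab x A \<in> dG H \<and> Lab x B \<in> dD H)"
| "remRH (Unv a A) H = (\<exists>x. Mem x a \<in> dG H \<and> Lab x A \<in> dD H)"
| "remRH (Lab x (Cond A B)) H = (\<exists>a. InN a x \<in> dG H \<and> Exi a A \<in> dG H \<and> CondL x a A B \<in> dD H)"
| "remRH _ H = False"

lemma remLH_mono: "remLH \<phi> H \<Longrightarrow> remLH \<phi> (H @ [S])"
  by (induct \<phi> H rule: remLH.induct) auto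
lemma remRH_mono: "remRH \<phi> H \<Longrightarrow> remRH \<phi> (H @ [S])"
  by (induct \<phi> H rule: remRH.induct) auto
lemma remL_LH: "remL \<phi> S \<Longrightarrow> remLH \<phi> (H @ [S])"
  by (induct \<phi> S rule: remL.induct) auto
lemma remR_RH: "remR \<phi> S \<Longrightarrow> remRH \<phi> (H @ [S])"
  by (induct \<phi> S rule: remR.induct) auto

definition HI :: "sequent list \<Rightarrow> bool" where
  "HI H \<longleftrightarrow> (\<forall>\<phi> \<in> dG H. \<phi> \<in># fst (last H) \<or> remLH \<phi> H) \<and> (\<forall>\<phi> \<in> dD H. \<phi> \<in># snd (last H) \<or> remRH \<phi> H)"

lemma HI_root: "HI [root x0 A0]"
  by (simp add: HI_def root_def)

lemma HI_step:
  assumes hi: "HI H" and ap: "ap H r Ps" and S: "S \<in> set Ps"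
  shows "HI (H @ [S])"
proof -
  have "\<phi> \<in># fst S \<or> remLH \<phi> (H @ [S])" if "\<phi> \<in> dG (H @ [S])" for \<phi>
  proof -
    have "\<phi> \<in># fst S \<or> \<phi> \<in># fst (last H) \<or> remLH \<phi> H" using that hi by (auto simp: HI_def)
    then show ?thesis using ap_remL[OF ap S, of \<phi>] remL_LH remLH_mono by blast
  qed
  moreover have "\<phi> \<in># snd S \<or> remRH \<phi> (H @ [S])" if "\<phi> \<in> dD (H @ [S])" for \<phi>
  proof -
    have "\<phi> \<in># snd S \<or> \<phi> \<in># snd (last H) \<or> remRH \<phi> H" using that hi by (auto simp: HI_def)
    then show ?thesis using ap_remR[OF ap S, of \<phi>] remR_RH remRH_mono by blast
  qed
  ultimately show ?thesis by (simp add: HI_def)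
qed

lemma step_ap: "step H r Ps \<Longrightarrow> ap H r Ps" by (simp add: step_def)

lemma branch_inv: "branch x0 A0 H \<Longrightarrow> BI A0 H \<and> HI H"
proof (induct rule: branch.induct)
  case start then show ?case using BI_root HI_root by blast
next
  case (extend H r Ps S) then show ?case using BI_step HI_step step_ap by blast
qed

lemma nostep_noap:
  assumes ni: "\<not> initial (last H)" and ns: "\<not> (\<exists>r Ps. step H r Ps)"
  shows "\<not> ap H r Ps"
proof
  assume a: "ap H r Ps"
  have st: "\<not> ap H r' Ps'" if "\<not> dynamic r'" "r' \<noteq> LCndStar" for r' Ps'
    using ns ni that by (auto simp: step_def dynamic_def)
  have nrc: "\<not> ap H RCnd Ps'" for Ps'
    using ns ni st by (simp add: step_def dynamic_def) blast
  have nlc: "\<not> ap H LCndStar Ps'" for Ps'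
    using ns ni nrc unfolding step_def dynamic_def by blast
  show False
  proof (cases "dynamic r")
    case True
    then show False using a ns ni st nlc nrc unfolding step_def by blast
  next
    case False then show False using a st nlc by (cases "r = LCndStar") auto
  qed
qed

lemma last_eq1: "\<phi> \<in># fst (last H) \<Longrightarrow> last H = (add_mset \<phi> (fst (last H) - {#\<phi>#}), snd (last H))"
  by simp
lemma last_eq1r: "\<phi> \<in># snd (last H) \<Longrightarrow> last H = (fst (last H), add_mset \<phi> (snd (last H) - {#\<phi>#}))"
  by simp
lemma mset_two: "\<phi> \<in># M \<Longrightarrow> \<psi> \<in># M \<Longrightarrow> \<phi> \<noteq> \<psi> \<Longrightarrow> M = add_mset \<phi> (add_mset \<psi> (M - {#\<phi>#} - {#\<psi>#}))"
proof -
  assume a: "\<phi> \<in># M" "\<psi> \<in># M" "\<phi> \<noteq> \<psi>"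
  then have "\<psi> \<in># M - {#\<phi>#}" by (simp add: in_diff_count)
  then have "add_mset \<psi> (M - {#\<phi>#} - {#\<psi>#}) = M - {#\<phi>#}" by (rule insert_DiffM)
  then show ?thesis using a by simp
qed
lemma last_eq2: "\<phi> \<in># fst (last H) \<Longrightarrow> \<psi> \<in># fst (last H) \<Longrightarrow> \<phi> \<noteq> \<psi> \<Longrightarrow>
   last H = (add_mset \<phi> (add_mset \<psi> (fst (last H) - {#\<phi>#} - {#\<psi>#})), snd (last H))"
  using mset_two by (metis prod.collapse)
lemma last_eq21: "\<phi> \<in># fst (last H) \<Longrightarrow> \<psi> \<in># fst (last H) \<Longrightarrow> \<phi> \<noteq> \<psi> \<Longrightarrow> \<chi> \<in># snd (last H) \<Longrightarrow>
   last H = (add_mset \<phi> (add_mset \<psi> (fst (last H) - {#\<phi>#} - {#\<psi>#})), add_mset \<chi> (snd (last H) - {#\<chi>#}))"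
  using mset_two by (metis prod.collapse insert_DiffM)
lemma last_eq11: "\<phi> \<in># fst (last H) \<Longrightarrow> \<chi> \<in># snd (last H) \<Longrightarrow>
   last H = (add_mset \<phi> (fst (last H) - {#\<phi>#}), add_mset \<chi> (snd (last H) - {#\<chi>#}))"
  by (metis prod.collapse insert_DiffM)

lemma fresh_w: "\<exists>x::nat. x \<notin> seq_wlabs S"
  using finite_seq_wlabs ex_new_if_finite infinite_UNIV_nat by blast
lemma fresh_n: "\<exists>x::nat. x \<notin> seq_nlabs S"
  using finite_seq_nlabs ex_new_if_finite infinite_UNIV_nat by blast

context
  fixes H :: "sequent list"
  assumes na: "\<And>r Ps. \<not> ap H r Ps"
begin

lemma na_LAnd: "Lab x (Conj A B) \<in># fst (last H) \<Longrightarrow> Lab x A \<in> dG H \<and> Lab x B \<in> dG H"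
  using na ap.LAnd[OF last_eq1] by blast
lemma na_RAnd: "Lab x (Conj A B) \<in># snd (last H) \<Longrightarrow> Lab x A \<in> dD H \<or> Lab x B \<in> dD H"
  using na ap.RAnd[OF last_eq1r] by blast
lemma na_LOr: "Lab x (Disj A B) \<in># fst (last H) \<Longrightarrow> Lab x A \<in> dG H \<or> Lab x B \<in> dG H"
  using na ap.LOr[OF last_eq1] by blast
lemma na_ROr: "Lab x (Disj A B) \<in># snd (last H) \<Longrightarrow> Lab x A \<in> dD H \<and> Lab x B \<in> dD H"
  using na ap.ROr[OF last_eq1r] by blast
lemma na_LImp: "Lab x (Imp A B) \<in># fst (last H) \<Longrightarrow> Lab x B \<in> dG H \<or> Lab x A \<in> dD H"
  using na ap.LImp[OF last_eq1] by blast
lemma na_RImp: "Lab x (Imp A B) \<in># snd (last H) \<Longrightarrow> Lab x A \<in> dG H \<and> Lab x B \<in> dD H"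
  using na ap.RImp[OF last_eq1r] by blast
lemma na_LAll: "Mem x a \<in># fst (last H) \<Longrightarrow> Unv a A \<in># fst (last H) \<Longrightarrow> Lab x A \<in> dG H"
  using na ap.LAll[OF last_eq2] by blast
lemma na_RAll: "Unv a A \<in># snd (last H) \<Longrightarrow> \<exists>x. Mem x a \<in># fst (last H) \<and> Lab x A \<in> dD H"
proof -
  assume a: "Unv a A \<in># snd (last H)"
  obtain x where "x \<notin> seq_wlabs (last H)" using fresh_w by blast
  then show ?thesis using na ap.RAll[OF last_eq1r[OF a], of x] by auto
qed
lemma na_LEx: "Exi a A \<in># fst (last H) \<Longrightarrow> \<exists>x. Mem x a \<in># fst (last H) \<and> Lab x A \<in> dG H"
proof -
  assume a: "Exi a A \<in># fst (last H)"
  obtain x where "x \<notin> seq_wlabs (last H)" using fresh_w by blast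
  then show ?thesis using na ap.LEx[OF last_eq1[OF a], of x] by auto
qed
lemma na_REx: "Mem x a \<in># fst (last H) \<Longrightarrow> Exi a A \<in># snd (last H) \<Longrightarrow> Lab x A \<in> dD H"
  using na ap.REx[OF last_eq11] by blast
lemma na_RCnd: "Lab x (Cond A B) \<in># snd (last H) \<Longrightarrow>
    \<exists>a. InN a x \<in># fst (last H) \<and> Exi a A \<in> dG H \<and> CondL x a A B \<in># snd (last H)"
proof -
  assume a: "Lab x (Cond A B) \<in># snd (last H)"
  obtain c where "c \<notin> seq_nlabs (last H)" using fresh_n by blast
  then show ?thesis using na ap.RCnd[OF last_eq1r[OF a], of c] by auto
qed
lemma na_LCnd: "InN a x \<in># fst (last H) \<Longrightarrow> Lab x (Cond A B) \<in># fst (last H) \<Longrightarrow>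
    Exi a A \<in> dD H \<or> (Exi a A \<in> dG H \<and> CondL x a A B \<in> dG H)"
  using na ap.LCndStar[OF last_eq2] by blast
lemma na_RBar: "InN c x \<in># fst (last H) \<Longrightarrow> Sub c a \<in># fst (last H) \<Longrightarrow> CondL x a A B \<in># snd (last H) \<Longrightarrow>
    Exi c A \<in># snd (last H) \<or> Unv c (Imp A B) \<in> dD H"
  using na ap.RBar[OF last_eq21] by fastforce
lemma na_LBar: "CondL x a A B \<in># fst (last H) \<Longrightarrow>
    \<exists>d. InN d x \<in># fst (last H) \<and> Sub d a \<in># fst (last H) \<and> Exi d A \<in> dG H \<and> Unv d (Imp A B) \<in># fst (last H)"
proof -
  assume a: "CondL x a A B \<in># fst (last H)"
  obtain c where "c \<notin> seq_nlabs (last H)" using fresh_n by blast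
  then show ?thesis using na ap.LBar[OF last_eq1[OF a], of c] by auto
qed
lemma na_Ref: "a \<in> seq_nlabs (last H) \<Longrightarrow> Sub a a \<in># fst (last H)"
  using na ap.Ref[of H "fst (last H)" "snd (last H)" a] by auto
lemma na_Tr: "Sub a b \<in># fst (last H) \<Longrightarrow> Sub b c \<in># fst (last H) \<Longrightarrow> Sub a c \<in># fst (last H)"
proof (cases "Sub a b = Sub b c")
  case True then show "Sub a b \<in># fst (last H) \<Longrightarrow> Sub b c \<in># fst (last H) \<Longrightarrow> Sub a c \<in># fst (last H)" by auto
next
  case False
  assume "Sub a b \<in># fst (last H)" "Sub b c \<in># fst (last H)"
  then show ?thesis using na ap.Tr[OF last_eq2[OF _ _ False]] by fastforce
qed
lemma na_LSub: "Mem x a \<in># fst (last H) \<Longrightarrow> Sub a b \<in># fst (last H) \<Longrightarrow> Mem x b \<in># fst (last H)"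
  using na ap.LSub[OF last_eq2] by fastforce
lemma na_Mon: "Sub b a \<in># fst (last H) \<Longrightarrow> Unv a A \<in># fst (last H) \<Longrightarrow> Unv b A \<in># fst (last H)"
  using na ap.MonAll[OF last_eq2] by fastforce

end


lemma saturated_intro:
  assumes bi: "BI A0 H" and hi: "HI H" and na: "\<And>r Ps. \<not> ap H r Ps" and ni: "\<not> initial (last H)"
  shows "saturated H"
proof -
  have hL: "\<phi> \<in> dG H \<Longrightarrow> \<phi> \<in># fst (last H) \<or> remLH \<phi> H" for \<phi> using hi by (auto simp: HI_def)
  have hR: "\<phi> \<in> dD H \<Longrightarrow> \<phi> \<in># snd (last H) \<or> remRH \<phi> H" for \<phi> using hi by (auto simp: HI_def)
  have b2: "\<phi> \<in> dG H \<Longrightarrow> persL \<phi> \<Longrightarrow> \<phi> \<in># fst (last H)" for \<phi> using bi by (auto simp: BI_def)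
  have b3: "\<phi> \<in> dD H \<Longrightarrow> persR \<phi> \<Longrightarrow> \<phi> \<in># snd (last H)" for \<phi> using bi by (auto simp: BI_def)
  show ?thesis
  unfolding saturated_def Let_def
  apply (intro conjI)
  subgoal using ni by (auto simp: initial_def)
  subgoal using ni by (auto simp: initial_def)
  subgoal
  proof (intro allI impI)
    fix x A B assume h: "Lab x (Conj A B) \<in> dG H"
    show "Lab x A \<in> dG H \<and> Lab x B \<in> dG H" using h hL[of "Lab x (Conj A B)"] na_LAnd[OF na, of x A B] by auto
  qed
  subgoal
  proof (intro allI impI)
    fix x A B assume h: "Lab x (Conj A B) \<in> dD H"
    show "Lab x A \<in> dD H \<or> Lab x B \<in> dD H" using h hR[of "Lab x (Conj A B)"] na_RAnd[OF na, of x A B] by auto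
  qed
  subgoal
  proof (intro allI impI)
    fix x A B assume h: "Lab x (Disj A B) \<in> dG H"
    show "Lab x A \<in> dG H \<or> Lab x B \<in> dG H" using h hL[of "Lab x (Disj A B)"] na_LOr[OF na, of x A B] by auto
  qed
  subgoal
  proof (intro allI impI)
    fix x A B assume h: "Lab x (Disj A B) \<in> dD H"
    show "Lab x A \<in> dD H \<and> Lab x B \<in> dD H" using h hR[of "Lab x (Disj A B)"] na_ROr[OF na, of x A B] by auto
  qed
  subgoal
  proof (intro allI impI)
    fix x A B assume h: "Lab x (Imp A B) \<in> dG H"
    show "Lab x B \<in> dG H \<or> Lab x A \<in> dD H" using h hL[of "Lab x (Imp A B)"] na_LImp[OF na, of x A B] by auto
  qed
  subgoal
  proof (intro allI impI)
    fix x A B assume h: "Lab x (Imp A B) \<in># snd (last H)"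
    show "Lab x A \<in> dG H \<and> Lab x B \<in> dD H" using h na_RImp[OF na, of x A B] by auto
  qed
  subgoal
  proof (intro allI impI)
    fix a assume h: "a \<in> seq_nlabs (last H)"
    show "Sub a a \<in># fst (last H)" using h na_Ref[OF na, of a] by auto
  qed
  subgoal
  proof (intro allI impI)
    fix a b c assume h: "Sub a b \<in># fst (last H) \<and> Sub b c \<in># fst (last H)"
    show "Sub a c \<in># fst (last H)" using h na_Tr[OF na, of a b c] by auto
  qed
  subgoal
  proof (intro allI impI)
    fix x a b assume h: "Mem x a \<in># fst (last H) \<and> Sub a b \<in># fst (last H)"
    show "Mem x b \<in># fst (last H)" using h na_LSub[OF na, of x a b] by auto
  qed
  subgoal
  proof (intro allI impI)
    fix x a A assume h: "Mem x a \<in># fst (last H) \<and> Unv a A \<in># fst (last H)"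
    show "Lab x A \<in> dG H" using h na_LAll[OF na, of x a A] by auto
  qed
  subgoal
  proof (intro allI impI)
    fix a A assume h: "Unv a A \<in> dD H"
    show "\<exists>x. Mem x a \<in># fst (last H) \<and> Lab x A \<in> dD H" using h hR[of "Unv a A"] na_RAll[OF na, of a A] b2[of "Mem _ _", simplified] b2[of "InN _ _", simplified] b2[of "Sub _ _", simplified] b2[of "Unv _ _", simplified] by (simp only: remRH.simps remLH.simps) blast
  qed
  subgoal
  proof (intro allI impI)
    fix a A assume h: "Exi a A \<in> dG H"
    show "\<exists>x. Mem x a \<in># fst (last H) \<and> Lab x A \<in> dG H" using h hL[of "Exi a A"] na_LEx[OF na, of a A] b2[of "Mem _ _", simplified] b2[of "InN _ _", simplified] b2[of "Sub _ _", simplified] b2[of "Unv _ _", simplified] by (simp only: remRH.simps remLH.simps) blast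
  qed
  subgoal
  proof (intro allI impI)
    fix x a A assume h: "Mem x a \<in># fst (last H) \<and> Exi a A \<in># snd (last H)"
    show "Lab x A \<in> dD H" using h na_REx[OF na, of x a A] by auto
  qed
  subgoal
  proof (intro allI impI)
    fix x A B assume h: "Lab x (Cond A B) \<in> dD H"
    show "\<exists>a. InN a x \<in># fst (last H) \<and> Exi a A \<in> dG H \<and> CondL x a A B \<in># snd (last H)" using h hR[of "Lab x (Cond A B)"] na_RCnd[OF na, of x A B] b2[of "Mem _ _", simplified] b2[of "InN _ _", simplified] b2[of "Sub _ _", simplified] b2[of "Unv _ _", simplified] b3[of "CondL _ _ _ _", simplified] b3[of "Exi _ _", simplified] by (simp only: remRH.simps remLH.simps) blast
  qed
  subgoal
  proof (intro allI impI)
    fix a x A B assume h: "InN a x \<in># fst (last H) \<and> Lab x (Cond A B) \<in># fst (last H)"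
    show "Exi a A \<in> dD H \<or> (Exi a A \<in> dG H \<and> CondL x a A B \<in> dG H)" using h na_LCnd[OF na, of a x A B] by auto
  qed
  subgoal
  proof (intro allI impI)
    fix c x a A B assume h: "InN c x \<in># fst (last H) \<and> Sub c a \<in># fst (last H) \<and> CondL x a A B \<in># snd (last H)"
    show "Exi c A \<in># snd (last H) \<or> Unv c (Imp A B) \<in> dD H" using h na_RBar[OF na, of c x a A B] by auto
  qed
  subgoal
  proof (intro allI impI)
    fix x a A B assume h: "CondL x a A B \<in> dG H"
    show "\<exists>c. InN c x \<in># fst (last H) \<and> Sub c a \<in># fst (last H) \<and> Exi c A \<in> dG H \<and> Unv c (Imp A B) \<in># fst (last H)" using h hL[of "CondL x a A B"] na_LBar[OF na, of x a A B] b2[of "Mem _ _", simplified] b2[of "InN _ _", simplified] b2[of "Sub _ _", simplified] b2[of "Unv _ _", simplified] by (simp only: remRH.simps remLH.simps) blast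
  qed
  subgoal
  proof (intro allI impI)
    fix a b A assume h: "Sub b a \<in># fst (last H) \<and> Unv a A \<in># fst (last H)"
    show "Unv b A \<in># fst (last H)" using h na_Mon[OF na, of b a A] by auto
  qed
  done
qed

theorem part2: "branch x0 A0 H \<Longrightarrow> \<not> (\<exists>r Ps. step H r Ps) \<Longrightarrow> initial (last H) \<or> saturated H"
proof -
  assume b: "branch x0 A0 H" and ns: "\<not> (\<exists>r Ps. step H r Ps)"
  have "BI A0 H" "HI H" using branch_inv[OF b] by auto
  show ?thesis
  proof (cases "initial (last H)")
    case False
    then have "\<And>r Ps. \<not> ap H r Ps" using nostep_noap ns by blast
    then show ?thesis using saturated_intro \<open>BI A0 H\<close> \<open>HI H\<close> False by blast
  qed simp
qed

fun wok :: "nat \<Rightarrow> (nat \<Rightarrow> key list) \<Rightarrow> (nat \<Rightarrow> key list) \<Rightarrow> lf \<Rightarrow> bool" where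
  "wok D pw pn (Lab y F) = (2 * deg F + wt (pw y) \<le> 2 * D)"
| "wok D pw pn (CondL x a A B) = (2 * deg (Cond A B) + wt (pw x) \<le> 2 * D)"
| "wok D pw pn (Exi a F) = (2 * deg F + wt (pn a) + 1 \<le> 2 * D)"
| "wok D pw pn (Unv a F) = (2 * deg F + wt (pn a) + 1 \<le> 2 * D)"
| "wok D pw pn (Mem y a) = (wt (pw y) = wt (pn a) + 1)"
| "wok D pw pn (Sub a b) = (wt (pn a) = wt (pn b))"
| "wok D pw pn (InN a x) = (wt (pn a) = wt (pw x) + 1)"

lemma wok_cong: "(\<And>y. y \<in> wlabs \<phi> \<Longrightarrow> pw' y = pw y) \<Longrightarrow> (\<And>a. a \<in> nlabs \<phi> \<Longrightarrow> pn' a = pn a) \<Longrightarrow>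
  wok D pw' pn' \<phi> = wok D pw pn \<phi>"
  by (cases \<phi>) auto

definition mw :: "sequent list \<Rightarrow> (nat \<Rightarrow> key list) \<Rightarrow> (nat \<Rightarrow> key list) \<Rightarrow> nat \<Rightarrow> bool" where
  "mw H pw pn y \<longleftrightarrow> pw y = [] \<or> (\<exists>a A. pw y = pn a @ [KE A] \<and> Mem y a \<in> dG H \<and> Lab y A \<in> dG H)
     \<or> (\<exists>a A. pw y = pn a @ [KA A] \<and> Mem y a \<in> dG H \<and> Lab y A \<in> dD H)"

definition mn :: "sequent list \<Rightarrow> (nat \<Rightarrow> key list) \<Rightarrow> (nat \<Rightarrow> key list) \<Rightarrow> nat \<Rightarrow> bool" where
  "mn H pw pn c \<longleftrightarrow> (\<exists>x A B. pn c = pw x @ [KR A B] \<and> InN c x \<in> dG H \<and> Exi c A \<in> dG H \<and> CondL x c A B \<in> dD H)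
     \<or> (\<exists>d x A B. pn c = pn d @ [KL A B] \<and> InN c x \<in> dG H \<and> InN d x \<in> dG H \<and> Sub c d \<in> dG H
            \<and> Exi c A \<in> dG H \<and> Unv c (Imp A B) \<in> dG H)"

definition PI :: "fm \<Rightarrow> sequent list \<Rightarrow> (nat \<Rightarrow> key list) \<Rightarrow> (nat \<Rightarrow> key list) \<Rightarrow> bool" where
  "PI A0 H pw pn \<longleftrightarrow> inj_on pw (seq_wlabs (last H)) \<and> inj_on pn (seq_nlabs (last H)) \<and>
    (\<forall>y \<in> seq_wlabs (last H). good (clo A0) (pw y) \<and> wt (pw y) \<le> 2 * deg A0 \<and> mw H pw pn y) \<and>
    (\<forall>c \<in> seq_nlabs (last H). good (clo A0) (pn c) \<and> wt (pn c) \<le> 2 * deg A0 \<and> mn H pw pn c) \<and>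
    (\<forall>\<phi> \<in> dG H \<union> dD H. wok (deg A0) pw pn \<phi>)"

lemma BI_lab: "BI A0 H \<Longrightarrow> \<phi> \<in> dG H \<or> \<phi> \<in> dD H \<Longrightarrow> wlabs \<phi> \<subseteq> seq_wlabs (last H) \<and> nlabs \<phi> \<subseteq> seq_nlabs (last H)"
  by (auto simp: BI_def)

lemma mw_mono:
  assumes m: "mw H pw pn y" and e: "pw' y = pw y" and a: "\<And>a. Mem y a \<in> dG H \<Longrightarrow> pn' a = pn a"
  shows "mw (H @ [S]) pw' pn' y"
proof -
  from m consider "pw y = []"
    | a A where "pw y = pn a @ [KE A]" "Mem y a \<in> dG H" "Lab y A \<in> dG H"
    | a A where "pw y = pn a @ [KA A]" "Mem y a \<in> dG H" "Lab y A \<in> dD H"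
    unfolding mw_def by blast
  then show ?thesis
  proof cases
    case 1 then show ?thesis using e by (simp add: mw_def)
  next
    case (2 a A)
    then have "pw' y = pn' a @ [KE A]" using e a by simp
    then show ?thesis using 2 unfolding mw_def by auto
  next
    case (3 a A)
    then have "pw' y = pn' a @ [KA A]" using e a by simp
    then show ?thesis using 3 unfolding mw_def by auto
  qed
qed

lemma mn_mono:
  assumes m: "mn H pw pn c" and e: "pn' c = pn c" and a: "\<And>x. InN c x \<in> dG H \<Longrightarrow> pw' x = pw x"
   and b: "\<And>d. Sub c d \<in> dG H \<Longrightarrow> pn' d = pn d"
  shows "mn (H @ [S]) pw' pn' c"
proof -
  from m consider x A B where "pn c = pw x @ [KR A B]" "InN c x \<in> dG H" "Exi c A \<in> dG H" "CondL x c A B \<in> dD H"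
    | d x A B where "pn c = pn d @ [KL A B]" "InN c x \<in> dG H" "InN d x \<in> dG H" "Sub c d \<in> dG H"
            "Exi c A \<in> dG H" "Unv c (Imp A B) \<in> dG H"
    unfolding mn_def by blast
  then show ?thesis
  proof cases
    case (1 x A B)
    then have "pn' c = pw' x @ [KR A B]" using e a by simp
    then show ?thesis using 1 unfolding mn_def by auto
  next
    case (2 d x A B)
    then have "pn' c = pn' d @ [KL A B]" using e b by simp
    then show ?thesis using 2 unfolding mn_def dG_snoc by blast
  qed
qed

lemma PI_gen:
  assumes bi: "BI A0 H" and pi: "PI A0 H pw pn"
  and wl: "seq_wlabs (last H) \<subseteq> seq_wlabs S" and nl: "seq_nlabs (last H) \<subseteq> seq_nlabs S"
  and aw: "\<And>y. y \<in> seq_wlabs (last H) \<Longrightarrow> pw' y = pw y"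
  and an: "\<And>a. a \<in> seq_nlabs (last H) \<Longrightarrow> pn' a = pn a"
  and iw: "inj_on pw' (seq_wlabs S)" and inn: "inj_on pn' (seq_nlabs S)"
  and nw: "\<And>y. y \<in> seq_wlabs S \<Longrightarrow> y \<notin> seq_wlabs (last H) \<Longrightarrow>
             good (clo A0) (pw' y) \<and> wt (pw' y) \<le> 2 * deg A0 \<and> mw (H @ [S]) pw' pn' y"
  and nn: "\<And>c. c \<in> seq_nlabs S \<Longrightarrow> c \<notin> seq_nlabs (last H) \<Longrightarrow>
             good (clo A0) (pn' c) \<and> wt (pn' c) \<le> 2 * deg A0 \<and> mn (H @ [S]) pw' pn' c"
  and wk: "\<And>\<phi>. \<phi> \<in># fst S \<or> \<phi> \<in># snd S \<Longrightarrow> wok (deg A0) pw' pn' \<phi>"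
  shows "PI A0 (H @ [S]) pw' pn'"
proof -
  have p3: "\<forall>y \<in> seq_wlabs (last H). good (clo A0) (pw y) \<and> wt (pw y) \<le> 2 * deg A0 \<and> mw H pw pn y"
   and p4: "\<forall>c \<in> seq_nlabs (last H). good (clo A0) (pn c) \<and> wt (pn c) \<le> 2 * deg A0 \<and> mn H pw pn c"
   and p5: "\<forall>\<phi> \<in> dG H \<union> dD H. wok (deg A0) pw pn \<phi>"
    using pi by (simp_all add: PI_def)
  have c3: "good (clo A0) (pw' y) \<and> wt (pw' y) \<le> 2 * deg A0 \<and> mw (H @ [S]) pw' pn' y" if y: "y \<in> seq_wlabs S" for y
  proof (cases "y \<in> seq_wlabs (last H)")
    case True
    have "mw (H @ [S]) pw' pn' y"
    proof (rule mw_mono)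
      show "mw H pw pn y" using p3 True by blast
      show "pw' y = pw y" using aw True by blast
      fix a assume "Mem y a \<in> dG H"
      then have "a \<in> seq_nlabs (last H)" using BI_lab[OF bi, of "Mem y a"] by auto
      then show "pn' a = pn a" using an by blast
    qed
    then show ?thesis using p3 True aw by auto
  next
    case False then show ?thesis using nw y by blast
  qed
  have c4: "good (clo A0) (pn' c) \<and> wt (pn' c) \<le> 2 * deg A0 \<and> mn (H @ [S]) pw' pn' c" if c: "c \<in> seq_nlabs S" for c
  proof (cases "c \<in> seq_nlabs (last H)")
    case True
    have "mn (H @ [S]) pw' pn' c"
    proof (rule mn_mono)
      show "mn H pw pn c" using p4 True by blast
      show "pn' c = pn c" using an True by blast
      fix x assume "InN c x \<in> dG H"
      then have "x \<in> seq_wlabs (last H)" using BI_lab[OF bi, of "InN c x"] by auto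
      then show "pw' x = pw x" using aw by blast
    next
      fix d assume "Sub c d \<in> dG H"
      then have "d \<in> seq_nlabs (last H)" using BI_lab[OF bi, of "Sub c d"] by auto
      then show "pn' d = pn d" using an by blast
    qed
    then show ?thesis using p4 True an by auto
  next
    case False then show ?thesis using nn c by blast
  qed
  have c5: "wok (deg A0) pw' pn' \<phi>" if "\<phi> \<in> dG (H @ [S]) \<union> dD (H @ [S])" for \<phi>
  proof -
    have "(\<phi> \<in> dG H \<or> \<phi> \<in> dD H) \<or> (\<phi> \<in># fst S \<or> \<phi> \<in># snd S)" using that by auto
    then show ?thesis
    proof (elim disjE[of "\<phi> \<in> dG H \<or> \<phi> \<in> dD H"])
      assume 1: "\<phi> \<in> dG H \<or> \<phi> \<in> dD H"
      then have l: "wlabs \<phi> \<subseteq> seq_wlabs (last H)" "nlabs \<phi> \<subseteq> seq_nlabs (last H)" using BI_lab[OF bi] by auto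
      have "wok (deg A0) pw' pn' \<phi> = wok (deg A0) pw pn \<phi>"
        by (rule wok_cong) (use l aw an in auto)
      then show ?thesis using p5 1 by auto
    next
      assume "\<phi> \<in># fst S \<or> \<phi> \<in># snd S" then show ?thesis using wk by blast
    qed
  qed
  show ?thesis unfolding PI_def using iw inn c3 c4 c5 by simp
qed

lemma ap_wok_static: "ap H r Ps \<Longrightarrow> \<not> dynamic r \<Longrightarrow> (\<forall>\<phi>\<in># fst (last H). wok D pw pn \<phi>) \<Longrightarrow>
   (\<forall>\<phi>\<in># snd (last H). wok D pw pn \<phi>) \<Longrightarrow>
   \<forall>S \<in> set Ps. (\<forall>\<phi>\<in># fst S. wok D pw pn \<phi>) \<and> (\<forall>\<phi> \<in># snd S. wok D pw pn \<phi>)"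
  apply (induct rule: ap.cases)
  apply (simp_all add: dynamic_def max_def split: if_split_asm)
  done


lemma PI_facts:
  assumes "PI A0 H pw pn"
  shows "inj_on pw (seq_wlabs (last H))" "inj_on pn (seq_nlabs (last H))"
    "\<And>y. y \<in> seq_wlabs (last H) \<Longrightarrow> good (clo A0) (pw y) \<and> wt (pw y) \<le> 2 * deg A0 \<and> mw H pw pn y"
    "\<And>c. c \<in> seq_nlabs (last H) \<Longrightarrow> good (clo A0) (pn c) \<and> wt (pn c) \<le> 2 * deg A0 \<and> mn H pw pn c"
    "\<And>\<phi>. \<phi> \<in> dG H \<or> \<phi> \<in> dD H \<Longrightarrow> wok (deg A0) pw pn \<phi>"
  using assms by (auto simp: PI_def)

lemma BI_facts:
  assumes "BI A0 H"
  shows "H \<noteq> []"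
    "\<And>\<phi>. \<phi> \<in> dG H \<or> \<phi> \<in> dD H \<Longrightarrow> wlabs \<phi> \<subseteq> seq_wlabs (last H) \<and> nlabs \<phi> \<subseteq> seq_nlabs (last H)"
    "\<And>\<phi>. \<phi> \<in> dG H \<Longrightarrow> persL \<phi> \<Longrightarrow> \<phi> \<in># fst (last H)"
    "\<And>\<phi>. \<phi> \<in> dD H \<Longrightarrow> persR \<phi> \<Longrightarrow> \<phi> \<in># snd (last H)"
    "\<And>\<phi>. \<phi> \<in> dG H \<or> \<phi> \<in> dD H \<Longrightarrow> lfms \<phi> \<subseteq> clo A0"
    "\<And>c x x'. InN c x \<in> dG H \<Longrightarrow> InN c x' \<in> dG H \<Longrightarrow> x = x'"
    "\<And>x d A B. CondL x d A B \<in> dG H \<Longrightarrow> InN d x \<in> dG H \<and> Exi d A \<in> dG H"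
  using assms unfolding BI_def by blast+

lemma wok_old:
  assumes bi: "BI A0 H" and pi: "PI A0 H pw pn" and ph: "\<phi> \<in># fst (last H) \<or> \<phi> \<in># snd (last H)"
    and aw: "\<And>y. y \<in> seq_wlabs (last H) \<Longrightarrow> pw' y = pw y"
    and an: "\<And>a. a \<in> seq_nlabs (last H) \<Longrightarrow> pn' a = pn a"
  shows "wok (deg A0) pw' pn' \<phi>"
proof -
  have ne: "H \<noteq> []" using BI_facts(1)[OF bi] .
  have d: "\<phi> \<in> dG H \<or> \<phi> \<in> dD H" using ph last_dG[OF ne] last_dD[OF ne] by blast
  have "wok (deg A0) pw' pn' \<phi> = wok (deg A0) pw pn \<phi>"
    by (rule wok_cong) (use BI_facts(2)[OF bi d] aw an in auto)
  then show ?thesis using PI_facts(5)[OF pi d] by simp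
qed

lemma PI_static:
  assumes bi: "BI A0 H" and pi: "PI A0 H pw pn" and ap: "ap H r Ps" and nd: "\<not> dynamic r" and S: "S \<in> set Ps"
  shows "PI A0 (H @ [S]) pw pn"
proof -
  have ne: "H \<noteq> []" using BI_facts(1)[OF bi] .
  have eqw: "seq_wlabs S = seq_wlabs (last H)" using ap_wlabs[OF ap S] ap_static_wlabs[OF ap S nd] by blast
  have eqn: "seq_nlabs S = seq_nlabs (last H)" using ap_nlabs[OF ap S] ap_static_nlabs[OF ap S nd] by blast
  have w1: "\<forall>\<phi>\<in># fst (last H). wok (deg A0) pw pn \<phi>" "\<forall>\<phi>\<in># snd (last H). wok (deg A0) pw pn \<phi>"
    using PI_facts(5)[OF pi] last_dG[OF ne] last_dD[OF ne] by blast+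
  have wS: "(\<forall>\<phi>\<in># fst S. wok (deg A0) pw pn \<phi>) \<and> (\<forall>\<phi> \<in># snd S. wok (deg A0) pw pn \<phi>)"
    using ap_wok_static[OF ap nd w1] S by blast
  show ?thesis
    by (rule PI_gen[OF bi pi]) (use ap_wlabs[OF ap S] ap_nlabs[OF ap S] eqw eqn PI_facts(1,2)[OF pi] wS in auto)
qed

lemma PI_RAll:
  assumes bi: "BI A0 H" and pi: "PI A0 H pw pn" and ap: "ap H r Ps" and S: "S \<in> set Ps"
    and lh: "last H = (G, add_mset (Unv a A) D)" and fr: "x \<notin> seq_wlabs (last H)"
    and bl: "\<not> (\<exists>y. Mem y a \<in># G \<and> Lab y A \<in> dD H)"
    and Sd: "S = (add_mset (Mem x a) G, add_mset (Lab x A) D)"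
  shows "PI A0 (H @ [S]) (pw(x := pn a @ [KA A])) pn"
proof -
  let ?p = "pn a @ [KA A]"
  let ?W = "seq_wlabs (last H)"
  have ne: "H \<noteq> []" using BI_facts(1)[OF bi] .
  have U: "Unv a A \<in> dD H" using last_dD[OF ne, of "Unv a A"] lh by simp
  have aN: "a \<in> seq_nlabs (last H)" using lh by simp
  have wU: "2 * deg A + wt (pn a) + 1 \<le> 2 * deg A0" using PI_facts(5)[OF pi, of "Unv a A"] U by simp
  have Ac: "A \<in> clo A0" using BI_facts(5)[OF bi, of "Unv a A"] U by simp
  have ga: "good (clo A0) (pn a)" using PI_facts(4)[OF pi aN] by blast
  have WS: "seq_wlabs S = insert x ?W" using lh Sd by auto
  have NS: "seq_nlabs S = seq_nlabs (last H)" using lh Sd by auto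
  have notin: "?p \<notin> pw ` ?W"
  proof
    assume "?p \<in> pw ` ?W"
    then obtain y where y: "y \<in> ?W" "pw y = ?p" by (metis imageE)
    have "mw H pw pn y" using PI_facts(3)[OF pi y(1)] by blast
    then obtain a' where a': "pn a' = pn a" "Mem y a' \<in> dG H" "Lab y A \<in> dD H"
      unfolding mw_def using y(2) by auto
    have "a' \<in> seq_nlabs (last H)" using BI_facts(2)[OF bi, of "Mem y a'"] a'(2) by auto
    then have "a' = a" using PI_facts(2)[OF pi] aN a'(1) by (meson inj_onD)
    then have "Mem y a \<in># G" using BI_facts(3)[OF bi, of "Mem y a"] a'(2) lh by simp
    then show False using bl a'(3) by blast
  qed
  show ?thesis
  proof (rule PI_gen[OF bi pi])
    show "seq_wlabs (last H) \<subseteq> seq_wlabs S" "seq_nlabs (last H) \<subseteq> seq_nlabs S" using WS NS by auto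
    show "\<And>y. y \<in> ?W \<Longrightarrow> (pw(x := ?p)) y = pw y" using fr by auto
    show "\<And>a. a \<in> seq_nlabs (last H) \<Longrightarrow> pn a = pn a" by simp
    show "inj_on (pw(x := ?p)) (seq_wlabs S)"
      unfolding WS using fr notin PI_facts(1)[OF pi] by (simp add: inj_on_fun_updI) blast
    show "inj_on pn (seq_nlabs S)" using NS PI_facts(2)[OF pi] by simp
    fix y assume "y \<in> seq_wlabs S" "y \<notin> ?W"
    then have yx: "y = x" using WS by auto
    have "mw (H @ [S]) (pw(x := ?p)) pn x" unfolding mw_def using Sd by auto
    then show "good (clo A0) ((pw(x := ?p)) y) \<and> wt ((pw(x := ?p)) y) \<le> 2 * deg A0 \<and> mw (H @ [S]) (pw(x := ?p)) pn y"
      using yx ga Ac wU by (simp add: good_snoc)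
  next
    fix c assume "c \<in> seq_nlabs S" "c \<notin> seq_nlabs (last H)"
    then show "good (clo A0) (pn c) \<and> wt (pn c) \<le> 2 * deg A0 \<and> mn (H @ [S]) (pw(x := ?p)) pn c" using NS by simp
  next
    fix \<phi> assume ph: "\<phi> \<in># fst S \<or> \<phi> \<in># snd S"
    have old: "wok (deg A0) (pw(x := ?p)) pn \<psi>" if "\<psi> \<in># fst (last H) \<or> \<psi> \<in># snd (last H)" for \<psi>
      by (rule wok_old[OF bi pi that]) (use fr in auto)
    show "wok (deg A0) (pw(x := ?p)) pn \<phi>"
      using ph Sd lh old wU by auto
  qed
qed

lemma PI_LEx:
  assumes bi: "BI A0 H" and pi: "PI A0 H pw pn"
    and lh: "last H = (add_mset (Exi a A) G, D)" and fr: "x \<notin> seq_wlabs (last H)"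
    and bl: "\<not> (\<exists>y. Mem y a \<in># fst (last H) \<and> Lab y A \<in> dG H)"
    and Sd: "S = (add_mset (Mem x a) (add_mset (Lab x A) G), D)"
  shows "PI A0 (H @ [S]) (pw(x := pn a @ [KE A])) pn"
proof -
  let ?p = "pn a @ [KE A]"
  let ?W = "seq_wlabs (last H)"
  have ne: "H \<noteq> []" using BI_facts(1)[OF bi] .
  have U: "Exi a A \<in> dG H" using last_dG[OF ne, of "Exi a A"] lh by simp
  have aN: "a \<in> seq_nlabs (last H)" using lh by simp
  have wU: "2 * deg A + wt (pn a) + 1 \<le> 2 * deg A0" using PI_facts(5)[OF pi, of "Exi a A"] U by simp
  have Ac: "A \<in> clo A0" using BI_facts(5)[OF bi, of "Exi a A"] U by simp
  have ga: "good (clo A0) (pn a)" using PI_facts(4)[OF pi aN] by blast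
  have WS: "seq_wlabs S = insert x ?W" using lh Sd by auto
  have NS: "seq_nlabs S = seq_nlabs (last H)" using lh Sd by auto
  have notin: "?p \<notin> pw ` ?W"
  proof
    assume "?p \<in> pw ` ?W"
    then obtain y where y: "y \<in> ?W" "pw y = ?p" by (metis imageE)
    have "mw H pw pn y" using PI_facts(3)[OF pi y(1)] by blast
    then obtain a' where a': "pn a' = pn a" "Mem y a' \<in> dG H" "Lab y A \<in> dG H"
      unfolding mw_def using y(2) by auto
    have "a' \<in> seq_nlabs (last H)" using BI_facts(2)[OF bi, of "Mem y a'"] a'(2) by auto
    then have "a' = a" using PI_facts(2)[OF pi] aN a'(1) by (meson inj_onD)
    then have "Mem y a \<in># fst (last H)" using BI_facts(3)[OF bi, of "Mem y a"] a'(2) by simp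
    then show False using bl a'(3) by blast
  qed
  show ?thesis
  proof (rule PI_gen[OF bi pi])
    show "seq_wlabs (last H) \<subseteq> seq_wlabs S" "seq_nlabs (last H) \<subseteq> seq_nlabs S" using WS NS by auto
    show "\<And>y. y \<in> ?W \<Longrightarrow> (pw(x := ?p)) y = pw y" using fr by auto
    show "\<And>a. a \<in> seq_nlabs (last H) \<Longrightarrow> pn a = pn a" by simp
    show "inj_on (pw(x := ?p)) (seq_wlabs S)"
      unfolding WS using fr notin PI_facts(1)[OF pi] by (simp add: inj_on_fun_updI) blast
    show "inj_on pn (seq_nlabs S)" using NS PI_facts(2)[OF pi] by simp
    fix y assume "y \<in> seq_wlabs S" "y \<notin> ?W"
    then have yx: "y = x" using WS by auto
    have "mw (H @ [S]) (pw(x := ?p)) pn x" unfolding mw_def using Sd by auto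
    then show "good (clo A0) ((pw(x := ?p)) y) \<and> wt ((pw(x := ?p)) y) \<le> 2 * deg A0 \<and> mw (H @ [S]) (pw(x := ?p)) pn y"
      using yx ga Ac wU by (simp add: good_snoc)
  next
    fix c assume "c \<in> seq_nlabs S" "c \<notin> seq_nlabs (last H)"
    then show "good (clo A0) (pn c) \<and> wt (pn c) \<le> 2 * deg A0 \<and> mn (H @ [S]) (pw(x := ?p)) pn c" using NS by simp
  next
    fix \<phi> assume ph: "\<phi> \<in># fst S \<or> \<phi> \<in># snd S"
    have old: "wok (deg A0) (pw(x := ?p)) pn \<psi>" if "\<psi> \<in># fst (last H) \<or> \<psi> \<in># snd (last H)" for \<psi>
      by (rule wok_old[OF bi pi that]) (use fr in auto)
    show "wok (deg A0) (pw(x := ?p)) pn \<phi>"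
      using ph Sd lh old wU by auto
  qed
qed

lemma PI_RCnd:
  assumes bi: "BI A0 H" and pi: "PI A0 H pw pn"
    and lh: "last H = (G, add_mset (Lab x (Cond A B)) D)" and fr: "a \<notin> seq_nlabs (last H)"
    and bl: "\<not> (\<exists>b. InN b x \<in># fst (last H) \<and> Exi b A \<in> dG H \<and> CondL x b A B \<in># snd (last H))"
    and Sd: "S = (add_mset (InN a x) (add_mset (Exi a A) G), add_mset (CondL x a A B) D)"
  shows "PI A0 (H @ [S]) pw (pn(a := pw x @ [KR A B]))"
proof -
  let ?p = "pw x @ [KR A B]"
  let ?N = "seq_nlabs (last H)"
  have ne: "H \<noteq> []" using BI_facts(1)[OF bi] .
  have L: "Lab x (Cond A B) \<in> dD H" using last_dD[OF ne, of "Lab x (Cond A B)"] lh by simp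
  have xW: "x \<in> seq_wlabs (last H)" using lh by simp
  have "wok (deg A0) pw pn (Lab x (Cond A B))" using PI_facts(5)[OF pi] L by blast
  then have wL: "2 * Suc (max (deg A) (deg B)) + wt (pw x) \<le> 2 * deg A0" by (simp only: wok.simps deg.simps)
  have "Cond A B \<in> clo A0" using BI_facts(5)[OF bi, of "Lab x (Cond A B)"] L by simp
  then have Ac: "A \<in> clo A0" "B \<in> clo A0" using clo_Cond by blast+
  have gx: "good (clo A0) (pw x)" using PI_facts(3)[OF pi xW] by blast
  have WS: "seq_wlabs S = seq_wlabs (last H)" using lh Sd by auto
  have NS: "seq_nlabs S = insert a ?N" using lh Sd by auto
  have notin: "?p \<notin> pn ` ?N"
  proof
    assume "?p \<in> pn ` ?N"
    then obtain c where c: "c \<in> ?N" "pn c = ?p" by (metis imageE)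
    have "mn H pw pn c" using PI_facts(4)[OF pi c(1)] by blast
    then consider x' A' B' where "pn c = pw x' @ [KR A' B']" "InN c x' \<in> dG H" "Exi c A' \<in> dG H" "CondL x' c A' B' \<in> dD H"
      | d A' B' where "pn c = pn d @ [KL A' B']"
      unfolding mn_def by blast
    then obtain x' where x': "pw x' = pw x" "InN c x' \<in> dG H" "Exi c A \<in> dG H" "CondL x' c A B \<in> dD H"
    proof cases
      case (1 x' A' B')
      then show ?thesis using c(2) that by simp
    next
      case (2 d A' B')
      then show ?thesis using c(2) by simp
    qed
    have "x' \<in> seq_wlabs (last H)" using BI_facts(2)[OF bi, of "InN c x'"] x'(2) by auto
    then have "x' = x" using PI_facts(1)[OF pi] xW x'(1) by (meson inj_onD)
    then have "InN c x \<in># fst (last H)" "CondL x c A B \<in># snd (last H)"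
      using BI_facts(3)[OF bi, of "InN c x"] BI_facts(4)[OF bi, of "CondL x c A B"] x' by simp_all
    then show False using bl x'(3) by blast
  qed
  show ?thesis
  proof (rule PI_gen[OF bi pi])
    show "seq_wlabs (last H) \<subseteq> seq_wlabs S" "seq_nlabs (last H) \<subseteq> seq_nlabs S" using WS NS by auto
    show "\<And>y. y \<in> seq_wlabs (last H) \<Longrightarrow> pw y = pw y" by simp
    show "\<And>b. b \<in> ?N \<Longrightarrow> (pn(a := ?p)) b = pn b" using fr by auto
    show "inj_on (pn(a := ?p)) (seq_nlabs S)"
      unfolding NS using fr notin PI_facts(2)[OF pi] by (simp add: inj_on_fun_updI) blast
    show "inj_on pw (seq_wlabs S)" using WS PI_facts(1)[OF pi] by simp
  next
    fix y assume "y \<in> seq_wlabs S" "y \<notin> seq_wlabs (last H)"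
    then show "good (clo A0) (pw y) \<and> wt (pw y) \<le> 2 * deg A0 \<and> mw (H @ [S]) pw (pn(a := ?p)) y" using WS by simp
  next
    fix c assume "c \<in> seq_nlabs S" "c \<notin> ?N"
    then have ca: "c = a" using NS by auto
    have "mn (H @ [S]) pw (pn(a := ?p)) a" unfolding mn_def using Sd by auto
    then show "good (clo A0) ((pn(a := ?p)) c) \<and> wt ((pn(a := ?p)) c) \<le> 2 * deg A0 \<and> mn (H @ [S]) pw (pn(a := ?p)) c"
      using ca gx Ac wL by (simp add: good_snoc)
  next
    fix \<phi> assume ph: "\<phi> \<in># fst S \<or> \<phi> \<in># snd S"
    have old: "wok (deg A0) pw (pn(a := ?p)) \<psi>" if "\<psi> \<in># fst (last H) \<or> \<psi> \<in># snd (last H)" for \<psi>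
      by (rule wok_old[OF bi pi that]) (use fr in auto)
    from ph Sd have "\<phi> = InN a x \<or> \<phi> = Exi a A \<or> \<phi> = CondL x a A B \<or> \<phi> \<in># fst (last H) \<or> \<phi> \<in># snd (last H)"
      using lh by auto
    then show "wok (deg A0) pw (pn(a := ?p)) \<phi>"
    proof (elim disjE)
      assume "\<phi> = InN a x" then show ?thesis by simp
    next
      assume "\<phi> = Exi a A" then show ?thesis using wL by simp
    next
      assume "\<phi> = CondL x a A B" then show ?thesis using wL by simp
    qed (use old in blast)+
  qed
qed

lemma trail_Unv:
  assumes bi: "BI A0 H" and pi: "PI A0 H pw pn"
    and mon: "\<And>b a F. Sub b a \<in># fst (last H) \<Longrightarrow> Unv a F \<in># fst (last H) \<Longrightarrow> Unv b F \<in># fst (last H)"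
  shows "c \<in> seq_nlabs (last H) \<Longrightarrow> (A, B) \<in> set (trl (pn c)) \<Longrightarrow> Unv c (Imp A B) \<in># fst (last H)"
proof (induct "length (pn c)" arbitrary: c rule: less_induct)
  case less
  have "mn H pw pn c" using PI_facts(4)[OF pi less.prems(1)] by blast
  then consider x A' B' where "pn c = pw x @ [KR A' B']"
    | d A' B' where "pn c = pn d @ [KL A' B']" "Sub c d \<in> dG H" "Unv c (Imp A' B') \<in> dG H"
    unfolding mn_def by blast
  then show ?case
  proof cases
    case 1 then show ?thesis using less.prems(2) by simp
  next
    case (2 d A' B')
    have Sc: "Sub c d \<in># fst (last H)" using BI_facts(3)[OF bi, of "Sub c d"] 2 by simp
    have Uc: "Unv c (Imp A' B') \<in># fst (last H)" using BI_facts(3)[OF bi, of "Unv c (Imp A' B')"] 2 by simp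
    have dN: "d \<in> seq_nlabs (last H)" using BI_facts(2)[OF bi, of "Sub c d"] 2 by auto
    from less.prems(2) 2 have "(A, B) = (A', B') \<or> (A, B) \<in> set (trl (pn d))" by simp
    then show ?thesis
    proof
      assume "(A, B) = (A', B')" then show ?thesis using Uc by simp
    next
      assume a: "(A, B) \<in> set (trl (pn d))"
      have "length (pn d) < length (pn c)" using 2 by simp
      then have "Unv d (Imp A B) \<in># fst (last H)" using less.hyps dN a by blast
      then show ?thesis using mon Sc by blast
    qed
  qed
qed

lemma good_distinct: "good C p \<Longrightarrow> distinct (trl p)"
  unfolding good_def by (metis order_refl take_all)

lemma PI_LBar:
  assumes bi: "BI A0 H" and pi: "PI A0 H pw pn"
    and lh: "last H = (add_mset (CondL x d A B) G, D)" and fr: "c \<notin> seq_nlabs (last H)"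
    and bl: "\<not> (\<exists>d'. InN d' x \<in># fst (last H) \<and> Sub d' d \<in># fst (last H) \<and> Exi d' A \<in> dG H
               \<and> Unv d' (Imp A B) \<in># fst (last H))"
    and Sd: "S = (add_mset (InN c x) (add_mset (Sub c d) (add_mset (Exi c A) (add_mset (Unv c (Imp A B)) G))), D)"
    and mon: "\<And>b a F. Sub b a \<in># fst (last H) \<Longrightarrow> Unv a F \<in># fst (last H) \<Longrightarrow> Unv b F \<in># fst (last H)"
    and rf: "\<And>a. a \<in> seq_nlabs (last H) \<Longrightarrow> Sub a a \<in># fst (last H)"
  shows "PI A0 (H @ [S]) pw (pn(c := pn d @ [KL A B]))"
proof -
  let ?p = "pn d @ [KL A B]"
  let ?N = "seq_nlabs (last H)"
  have ne: "H \<noteq> []" using BI_facts(1)[OF bi] .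
  have CL: "CondL x d A B \<in> dG H" using last_dG[OF ne, of "CondL x d A B"] lh by simp
  have Id: "InN d x \<in> dG H" and Ed: "Exi d A \<in> dG H" using BI_facts(7)[OF bi CL] by auto
  have dN: "d \<in> ?N" using lh by simp
  have xW: "x \<in> seq_wlabs (last H)" using lh by simp
  have cd: "c \<noteq> d" using fr dN by auto
  have "wok (deg A0) pw pn (CondL x d A B)" using PI_facts(5)[OF pi] CL by blast
  then have wL: "2 * max (deg A) (deg B) + wt (pw x) + 2 \<le> 2 * deg A0" by (simp only: wok.simps deg.simps) simp
  have "wok (deg A0) pw pn (InN d x)" using PI_facts(5)[OF pi] Id by blast
  then have wI: "wt (pn d) = wt (pw x) + 1" by (simp only: wok.simps)
  have dA: "deg A \<le> max (deg A) (deg B)" "deg B \<le> max (deg A) (deg B)" by simp_all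
  have "Cond A B \<in> clo A0" using BI_facts(5)[OF bi, of "CondL x d A B"] CL by simp
  then have Ac: "A \<in> clo A0" "B \<in> clo A0" "Imp A B \<in> clo A0" using clo_Cond by blast+
  have gd: "good (clo A0) (pn d)" "wt (pn d) \<le> 2 * deg A0" using PI_facts(4)[OF pi dN] by blast+
  have notAB: "(A, B) \<notin> set (trl (pn d))"
  proof
    assume "(A, B) \<in> set (trl (pn d))"
    then have U: "Unv d (Imp A B) \<in># fst (last H)" using trail_Unv[OF bi pi, of d A B] mon dN by blast
    have "InN d x \<in># fst (last H)" using BI_facts(3)[OF bi Id] by simp
    moreover have "Sub d d \<in># fst (last H)" using rf dN by blast
    ultimately show False using bl U Ed by blast
  qed
  have WS: "seq_wlabs S = seq_wlabs (last H)" using lh Sd by auto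
  have NS: "seq_nlabs S = insert c ?N" using lh Sd by auto
  have notin: "?p \<notin> pn ` ?N"
  proof
    assume "?p \<in> pn ` ?N"
    then obtain c' where c': "c' \<in> ?N" "pn c' = ?p" by (metis imageE)
    have "mn H pw pn c'" using PI_facts(4)[OF pi c'(1)] by blast
    then consider x' A' B' where "pn c' = pw x' @ [KR A' B']"
      | d' x' A' B' where "pn c' = pn d' @ [KL A' B']" "InN c' x' \<in> dG H" "InN d' x' \<in> dG H" "Sub c' d' \<in> dG H"
            "Exi c' A' \<in> dG H" "Unv c' (Imp A' B') \<in> dG H"
      unfolding mn_def by blast
    then show False
    proof cases
      case 1 then show False using c'(2) by simp
    next
      case (2 d' x' A' B')
      have e: "pn d' = pn d" "A' = A" "B' = B" using 2(1) c'(2) by simp_all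
      have "d' \<in> ?N" using BI_facts(2)[OF bi, of "Sub c' d'"] 2 by auto
      then have dd: "d' = d" using PI_facts(2)[OF pi] dN e(1) by (meson inj_onD)
      then have xx: "x' = x" using BI_facts(6)[OF bi, of d x' x] 2(3) Id by blast
      have "InN c' x \<in># fst (last H)" "Sub c' d \<in># fst (last H)" "Unv c' (Imp A B) \<in># fst (last H)"
        using BI_facts(3)[OF bi, of "InN c' x"] BI_facts(3)[OF bi, of "Sub c' d"] BI_facts(3)[OF bi, of "Unv c' (Imp A B)"]
          2 e dd xx by simp_all
      then show False using bl 2(5) e by blast
    qed
  qed
  show ?thesis
  proof (rule PI_gen[OF bi pi])
    show "seq_wlabs (last H) \<subseteq> seq_wlabs S" "seq_nlabs (last H) \<subseteq> seq_nlabs S" using WS NS by auto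
    show "\<And>y. y \<in> seq_wlabs (last H) \<Longrightarrow> pw y = pw y" by simp
    show "\<And>b. b \<in> ?N \<Longrightarrow> (pn(c := ?p)) b = pn b" using fr by auto
    show "inj_on (pn(c := ?p)) (seq_nlabs S)"
      unfolding NS using fr notin PI_facts(2)[OF pi] by (simp add: inj_on_fun_updI) blast
    show "inj_on pw (seq_wlabs S)" using WS PI_facts(1)[OF pi] by simp
  next
    fix y assume "y \<in> seq_wlabs S" "y \<notin> seq_wlabs (last H)"
    then show "good (clo A0) (pw y) \<and> wt (pw y) \<le> 2 * deg A0 \<and> mw (H @ [S]) pw (pn(c := ?p)) y" using WS by simp
  next
    fix c' assume "c' \<in> seq_nlabs S" "c' \<notin> ?N"
    then have cc: "c' = c" using NS by auto
    have e1: "(pn(c := ?p)) c = (pn(c := ?p)) d @ [KL A B]" using cd by simp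
    have "mn (H @ [S]) pw (pn(c := ?p)) c" unfolding mn_def
      using e1 Sd Id by (intro disjI2 exI[of _ d] exI[of _ x] exI[of _ A] exI[of _ B]) simp
    moreover have "good (clo A0) ?p" using gd(1) Ac notAB good_distinct[OF gd(1)] by (simp add: good_snoc)
    ultimately show "good (clo A0) ((pn(c := ?p)) c') \<and> wt ((pn(c := ?p)) c') \<le> 2 * deg A0 \<and> mn (H @ [S]) pw (pn(c := ?p)) c'"
      using cc gd(2) by simp
  next
    fix \<phi> assume ph: "\<phi> \<in># fst S \<or> \<phi> \<in># snd S"
    have old: "wok (deg A0) pw (pn(c := ?p)) \<psi>" if "\<psi> \<in># fst (last H) \<or> \<psi> \<in># snd (last H)" for \<psi>
      by (rule wok_old[OF bi pi that]) (use fr in auto)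
    from ph Sd have "\<phi> = InN c x \<or> \<phi> = Sub c d \<or> \<phi> = Exi c A \<or> \<phi> = Unv c (Imp A B) \<or> \<phi> \<in># fst (last H) \<or> \<phi> \<in># snd (last H)"
      using lh by auto
    then show "wok (deg A0) pw (pn(c := ?p)) \<phi>"
    proof (elim disjE)
      assume "\<phi> = InN c x" then show ?thesis using wI by simp
    next
      assume "\<phi> = Sub c d" then show ?thesis using cd by simp
    next
      assume "\<phi> = Exi c A" then show ?thesis using wL wI dA by simp
    next
      assume "\<phi> = Unv c (Imp A B)" then show ?thesis using wL wI dA by simp
    qed (use old in blast)+
  qed
qed

lemma PI_root: "PI A0 [root x0 A0] (\<lambda>_. []) (\<lambda>_. [])"
  unfolding PI_def mw_def by (auto simp: root_def seq_wlabs_def seq_nlabs_def)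

lemma nMon: "(\<And>Ps. \<not> ap H MonAll Ps) \<Longrightarrow> Sub b a \<in># fst (last H) \<Longrightarrow> Unv a F \<in># fst (last H) \<Longrightarrow> Unv b F \<in># fst (last H)"
  using ap.MonAll[OF last_eq2] by fastforce
lemma nRef: "(\<And>Ps. \<not> ap H Ref Ps) \<Longrightarrow> a \<in> seq_nlabs (last H) \<Longrightarrow> Sub a a \<in># fst (last H)"
  using ap.Ref[of H "fst (last H)" "snd (last H)" a] by auto

lemma PI_step:
  assumes bi: "BI A0 H" and pi: "PI A0 H pw pn" and st: "step H r Ps" and S: "S \<in> set Ps"
  shows "\<exists>pw' pn'. PI A0 (H @ [S]) pw' pn'"
proof (cases "dynamic r")
  case False
  then show ?thesis using PI_static[OF bi pi step_ap[OF st] False S] by blast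
next
  case True
  have ap: "ap H r Ps" using step_ap[OF st] .
  from ap show ?thesis
  proof (cases rule: ap.cases)
    case (RAll G a A D x)
    have "PI A0 (H @ [S]) (pw(x := pn a @ [KA A])) pn"
      by (rule PI_RAll[OF bi pi ap S]) (use RAll S in auto)
    then show ?thesis by blast
  next
    case (LEx a A G D x)
    have "PI A0 (H @ [S]) (pw(x := pn a @ [KE A])) pn"
      by (rule PI_LEx[OF bi pi]) (use LEx S in auto)
    then show ?thesis by blast
  next
    case (RCnd G x A B D a)
    have "PI A0 (H @ [S]) pw (pn(a := pw x @ [KR A B]))"
      by (rule PI_RCnd[OF bi pi]) (use RCnd S in auto)
    then show ?thesis by blast
  next
    case (LBar x a A B G D c)
    have ns: "\<not> ap H r' Ps'" if "\<not> dynamic r'" for r' Ps'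
      using st that LBar by (auto simp: step_def dynamic_def)
    have mon: "\<And>b a F. Sub b a \<in># fst (last H) \<Longrightarrow> Unv a F \<in># fst (last H) \<Longrightarrow> Unv b F \<in># fst (last H)"
      using nMon[of H] ns[of MonAll] by (auto simp: dynamic_def)
    have rf: "\<And>a. a \<in> seq_nlabs (last H) \<Longrightarrow> Sub a a \<in># fst (last H)"
      using nRef[of H] ns[of Ref] by (auto simp: dynamic_def)
    have "PI A0 (H @ [S]) pw (pn(c := pn a @ [KL A B]))"
      by (rule PI_LBar[OF bi pi LBar(3) LBar(4) LBar(5) _ mon rf]) (use S LBar(2) in auto)
    then show ?thesis by blast
  qed (use True in \<open>simp_all add: dynamic_def\<close>)
qed

lemma branch_PI: "branch x0 A0 H \<Longrightarrow> \<exists>pw pn. PI A0 H pw pn"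
proof (induct rule: branch.induct)
  case start then show ?case using PI_root by blast
next
  case (extend H r Ps S)
  then show ?case using PI_step branch_inv by blast
qed

lemma new_fact0:
  assumes ap: "ap H r Ps" and S: "S \<in> set Ps"
    and pG: "\<And>\<phi>. \<phi> \<in> dG H \<Longrightarrow> persL \<phi> \<Longrightarrow> \<phi> \<in># fst (last H)"
    and pD: "\<And>\<phi>. \<phi> \<in> dD H \<Longrightarrow> persR \<phi> \<Longrightarrow> \<phi> \<in># snd (last H)"
    and lW: "\<And>y a. Mem y a \<in> dG H \<Longrightarrow> y \<in> seq_wlabs (last H)"
    and lN: "\<And>c x. InN c x \<in> dG H \<Longrightarrow> c \<in> seq_nlabs (last H)"
  shows "\<exists>\<phi>. (\<phi> \<in># fst S \<and> \<phi> \<notin> dG H) \<or> (\<phi> \<in># snd S \<and> \<phi> \<notin> dD H)"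
  using ap S
proof (cases rule: ap.cases)
  case (LAnd x A B G D) then show ?thesis using S by auto
next
  case (RAnd G x A B D) then show ?thesis using S by auto
next
  case (LOr x A B G D) then show ?thesis using S by auto
next
  case (ROr G x A B D) then show ?thesis using S by auto
next
  case (LImp x A B G D) then show ?thesis using S by auto
next
  case (RImp G x A B D) then show ?thesis using S by auto
next
  case (LAll x a A G D) then show ?thesis using S by auto
next
  case (RAll G a A D x)
  then have "Mem x a \<notin> dG H" using lW by blast
  then show ?thesis using S RAll by auto
next
  case (LEx a A G D x)
  then have "Mem x a \<notin> dG H" using lW by blast
  then show ?thesis using S LEx by auto
next
  case (REx x a G A D) then show ?thesis using S by auto
next
  case (RCnd G x A B D a)
  then have "InN a x \<notin> dG H" using lN by blast
  then show ?thesis using S RCnd by auto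
next
  case (LCndStar a x A B G D) then show ?thesis using S by auto
next
  case (RBar c x a G A B D)
  then have "Exi c A \<notin> dD H" using pD[of "Exi c A"] by auto
  then show ?thesis using S RBar by auto
next
  case (LBar x a A B G D c)
  then have "InN c x \<notin> dG H" using lN by blast
  then show ?thesis using S LBar by auto
next
  case (Ref G D a)
  then have "Sub a a \<notin> dG H" using pG[of "Sub a a"] by auto
  then show ?thesis using S Ref by auto
next
  case (Tr c b a G D)
  then have "Sub c a \<notin> dG H" using pG[of "Sub c a"] by auto
  then show ?thesis using S Tr by auto
next
  case (LSub x a b G D)
  then have "Mem x b \<notin> dG H" using pG[of "Mem x b"] by auto
  then show ?thesis using S LSub by auto
next
  case (MonAll b a A G D)
  then have "Unv b A \<notin> dG H" using pG[of "Unv b A"] by auto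
  then show ?thesis using S MonAll by auto
qed

lemma new_fact:
  assumes bi: "BI A0 H" and ap: "ap H r Ps" and S: "S \<in> set Ps"
  shows "facts H \<subset> facts (H @ [S])"
proof -
  have "\<exists>\<phi>. (\<phi> \<in># fst S \<and> \<phi> \<notin> dG H) \<or> (\<phi> \<in># snd S \<and> \<phi> \<notin> dD H)"
  proof (rule new_fact0[OF ap S])
    show "\<And>\<phi>. \<phi> \<in> dG H \<Longrightarrow> persL \<phi> \<Longrightarrow> \<phi> \<in># fst (last H)" using BI_facts(3)[OF bi] .
    show "\<And>\<phi>. \<phi> \<in> dD H \<Longrightarrow> persR \<phi> \<Longrightarrow> \<phi> \<in># snd (last H)" using BI_facts(4)[OF bi] .
    show "\<And>y a. Mem y a \<in> dG H \<Longrightarrow> y \<in> seq_wlabs (last H)" using BI_facts(2)[OF bi] by fastforce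
    show "\<And>c x. InN c x \<in> dG H \<Longrightarrow> c \<in> seq_nlabs (last H)" using BI_facts(2)[OF bi] by fastforce
  qed
  then show ?thesis unfolding facts_def by auto
qed

definition PS :: "fm \<Rightarrow> key list set" where
  "PS A0 = {p. set p \<subseteq> keys (clo A0) \<and> length p \<le> 2 * deg A0 * (card (clo A0 \<times> clo A0) + 1) + card (clo A0 \<times> clo A0)}"

definition bnd :: "fm \<Rightarrow> nat" where
  "bnd A0 = card ((UNIV :: bool set) \<times> AF (to_nat ` PS A0) (clo A0))"

lemma finite_PS: "finite (PS A0)"
  unfolding PS_def by (rule finite_lists_length_le[OF finite_keys[OF finite_clo]])

lemma in_PS: "good (clo A0) p \<Longrightarrow> wt p \<le> 2 * deg A0 \<Longrightarrow> p \<in> PS A0"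
proof -
  assume g: "good (clo A0) p" and w: "wt p \<le> 2 * deg A0"
  have "length p \<le> wt p * (card (clo A0 \<times> clo A0) + 1) + card (clo A0 \<times> clo A0)"
    using good_length[OF g finite_clo] .
  also have "\<dots> \<le> 2 * deg A0 * (card (clo A0 \<times> clo A0) + 1) + card (clo A0 \<times> clo A0)"
    by (rule add_le_mono[OF mult_le_mono1[OF w] order_refl])
  finally show ?thesis using g unfolding PS_def good_def by simp
qed

lemma card_facts:
  assumes bi: "BI A0 H" and pi: "PI A0 H pw pn"
  shows "card (facts H) \<le> bnd A0"
proof -
  let ?W = "seq_wlabs (last H)" and ?N = "seq_nlabs (last H)"
  let ?s = "to_nat \<circ> pw" and ?t = "to_nat \<circ> pn"
  let ?E = "to_nat ` PS A0"
  have i1: "inj_on ?s ?W" by (rule comp_inj_on[OF PI_facts(1)[OF pi]]) (rule inj_on_subset[OF inj_to_nat], simp)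
  have i2: "inj_on ?t ?N" by (rule comp_inj_on[OF PI_facts(2)[OF pi]]) (rule inj_on_subset[OF inj_to_nat], simp)
  have sW: "?s ` ?W \<subseteq> ?E"
  proof
    fix z assume "z \<in> ?s ` ?W"
    then obtain y where y: "y \<in> ?W" "z = to_nat (pw y)" by auto
    have "pw y \<in> PS A0" using PI_facts(3)[OF pi y(1)] in_PS by blast
    then show "z \<in> ?E" using y(2) by simp
  qed
  have tN: "?t ` ?N \<subseteq> ?E"
  proof
    fix z assume "z \<in> ?t ` ?N"
    then obtain y where y: "y \<in> ?N" "z = to_nat (pn y)" by auto
    have "pn y \<in> PS A0" using PI_facts(4)[OF pi y(1)] in_PS by blast
    then show "z \<in> ?E" using y(2) by simp
  qed
  have lab: "\<And>\<phi>. \<phi> \<in> dG H \<or> \<phi> \<in> dD H \<Longrightarrow> wlabs \<phi> \<subseteq> ?W \<and> nlabs \<phi> \<subseteq> ?N" using BI_facts(2)[OF bi] .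
  have cl: "\<And>\<phi>. \<phi> \<in> dG H \<or> \<phi> \<in> dD H \<Longrightarrow> lfms \<phi> \<subseteq> clo A0" using BI_facts(5)[OF bi] .
  let ?f = "map_prod id (rl ?s ?t)"
  have fa: "\<And>b \<phi>. (b, \<phi>) \<in> facts H \<Longrightarrow> \<phi> \<in> dG H \<or> \<phi> \<in> dD H" unfolding facts_def by auto
  have inj: "inj_on ?f (facts H)"
  proof (rule inj_onI)
    fix u v assume u: "u \<in> facts H" and v: "v \<in> facts H" and e: "?f u = ?f v"
    obtain b \<phi> where ub: "u = (b, \<phi>)" by (cases u)
    obtain b' \<psi> where vb: "v = (b', \<psi>)" by (cases v)
    have l1: "wlabs \<phi> \<subseteq> ?W" "nlabs \<phi> \<subseteq> ?N" using lab[OF fa[OF u[unfolded ub]]] by blast+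
    have l2: "wlabs \<psi> \<subseteq> ?W" "nlabs \<psi> \<subseteq> ?N" using lab[OF fa[OF v[unfolded vb]]] by blast+
    have e2: "rl ?s ?t \<phi> = rl ?s ?t \<psi>" using e ub vb by simp
    have "\<phi> = \<psi>" by (rule rl_inj[OF i1 i2 l1 l2 e2])
    then show "u = v" using e ub vb by simp
  qed
  have sub: "?f ` facts H \<subseteq> (UNIV :: bool set) \<times> AF ?E (clo A0)"
  proof
    fix z assume "z \<in> ?f ` facts H"
    then obtain b \<phi> where z: "z = ?f (b, \<phi>)" and m: "(b, \<phi>) \<in> facts H" by auto
    have d: "\<phi> \<in> dG H \<or> \<phi> \<in> dD H" using fa[OF m] .
    have l1: "wlabs \<phi> \<subseteq> ?W" "nlabs \<phi> \<subseteq> ?N" using lab[OF d] by blast+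
    have "wlabs (rl ?s ?t \<phi>) \<subseteq> ?E" unfolding rl_labs using image_mono[OF l1(1), of ?s] sW by (rule subset_trans)
    moreover have "nlabs (rl ?s ?t \<phi>) \<subseteq> ?E" unfolding rl_labs using image_mono[OF l1(2), of ?t] tN by (rule subset_trans)
    moreover have "lfms (rl ?s ?t \<phi>) \<subseteq> clo A0" unfolding rl_labs using cl[OF d] .
    ultimately have "rl ?s ?t \<phi> \<in> AF ?E (clo A0)" unfolding AF_def by blast
    then show "z \<in> (UNIV :: bool set) \<times> AF ?E (clo A0)" using z by simp
  qed
  have fE: "finite ?E" using finite_PS by simp
  have "finite (AF ?E (clo A0))" by (rule finite_AF[OF fE finite_clo]) (use clo_Cond in blast)
  then have fin: "finite ((UNIV :: bool set) \<times> AF ?E (clo A0))" by simp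
  show ?thesis unfolding bnd_def using card_inj_on_le[OF inj sub fin] .
qed

theorem mainTheorem16:
  fixes x0 :: wlab and A0 :: fm
  shows "\<not> (\<exists>f :: nat \<Rightarrow> sequent. f 0 = root x0 A0 \<and>
              (\<forall>k. \<exists>r Ps. step (map f [0..<Suc k]) r Ps \<and> f (Suc k) \<in> set Ps))
         \<and> (\<forall>H. branch x0 A0 H \<and> \<not> (\<exists>r Ps. step H r Ps)
              \<longrightarrow> initial (last H) \<or> saturated H)"
proof
  show "\<not> (\<exists>f :: nat \<Rightarrow> sequent. f 0 = root x0 A0 \<and>
              (\<forall>k. \<exists>r Ps. step (map f [0..<Suc k]) r Ps \<and> f (Suc k) \<in> set Ps))"
  proof
    assume "\<exists>f :: nat \<Rightarrow> sequent. f 0 = root x0 A0 \<and>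
              (\<forall>k. \<exists>r Ps. step (map f [0..<Suc k]) r Ps \<and> f (Suc k) \<in> set Ps)"
    then obtain f :: "nat \<Rightarrow> sequent" where f0: "f 0 = root x0 A0"
      and fs: "\<And>k. \<exists>r Ps. step (map f [0..<Suc k]) r Ps \<and> f (Suc k) \<in> set Ps" by blast
    define Hk where "Hk k = map f [0..<Suc k]" for k
    have Hs: "Hk (Suc k) = Hk k @ [f (Suc k)]" for k unfolding Hk_def by simp
    have br: "branch x0 A0 (Hk k)" for k
    proof (induct k)
      case 0 then show ?case using f0 branch.start by (simp add: Hk_def)
    next
      case (Suc k)
      obtain r Ps where "step (Hk k) r Ps" "f (Suc k) \<in> set Ps" using fs[of k] unfolding Hk_def by blast
      then show ?case using branch.extend[OF Suc] Hs by simp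
    qed
    have gr: "k \<le> card (facts (Hk k))" for k
    proof (induct k)
      case 0 then show ?case by simp
    next
      case (Suc k)
      obtain r Ps where st: "step (Hk k) r Ps" and m: "f (Suc k) \<in> set Ps" using fs[of k] unfolding Hk_def by blast
      have "facts (Hk k) \<subset> facts (Hk (Suc k))"
        using new_fact[OF _ step_ap[OF st] m] branch_inv[OF br[of k]] Hs by auto
      then have "card (facts (Hk k)) < card (facts (Hk (Suc k)))" using psubset_card_mono finite_facts by blast
      then show ?case using Suc by simp
    qed
    have bd: "card (facts (Hk k)) \<le> bnd A0" for k
      using card_facts branch_inv[OF br[of k]] branch_PI[OF br[of k]] by blast
    show False using gr[of "Suc (bnd A0)"] bd[of "Suc (bnd A0)"] by simp
  qed
next
  show "\<forall>H. branch x0 A0 H \<and> \<not> (\<exists>r Ps. step H r Ps) \<longrightarrow> initial (last H) \<or> saturated H"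
    using part2 by blast
qed

end
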